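(* The action of $O_d(\mathbb R)$ on $U_d(\mathbb R)\subset\mathbb R^d\oplus\mathfrak{so}(d,\mathbb R)$ is free.
   Context: Fix $d\ge2$. $V=\mathbb C^d\oplus\mathfrak{so}(d,\mathbb C)$, elements $(v,M)$ with $v=(c_1,\dots,c_d)^\top$, $M$ skew-symmetric, $M_{ij}=c_{ij}=-M_{ji}$ for $i<j$; $O_d(\mathbb K)=\{A\in\mathbb K^{d\times d}:AA^\top=I\}$ acts by $A\cdot(v,M)=(Av,AMA^\top)$. $L^{(1)}=\{c_1=\dots=c_{d-1}=0\}$, $L^{(i)}=\{(v,M)\in L^{(i-1)}:c_{k(d-i+2)}=0,\ 1\le k\le d-i\}$ for $2\le i\le d-1$. $f_1=\sum c_i^2$; for $2\le i\le d-1$, $f_i$ is the $O_d(\mathbb C)$-invariant rational function on $V$ with $f_i|_{L^{(i-1)}}=c_{1(d-i+2)}^2+\dots+c_{(d-i+1)(d-i+2)}^2$; $f_d$ is the invariant rational function with $f_d|_{L^{(d-1)}}=c_{12}^2$ (these exist and are unique). $U_d(\mathbb C)$ is the set of points of $V$ in the domain of all $f_k$ with $\prod_kf_k\neq0$, and $U_d(\mathbb R)=U_d(\mathbb C)\cap(\mathbb R^d\oplus\mathfrak{so}(d,\mathbb R))$. An action is free if all stabilizers are trivial. *)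

theory Defs
  imports Complex_Main
begin

text \<open>Points of V = C^d + so(d): a pair (v, M) with v indexed by 1..d and
  M a skew-symmetric d x d matrix indexed by 1..d (zero outside the index range).\<close>
type_synonym 'a pt = "(nat \<Rightarrow> 'a) \<times> (nat \<Rightarrow> nat \<Rightarrow> 'a)"

definition Vsp :: "nat \<Rightarrow> ('a::comm_ring_1) pt set" where
  "Vsp d = {(v, M). (\<forall>i. i \<notin> {1..d} \<longrightarrow> v i = 0)
      \<and> (\<forall>i j. (i \<notin> {1..d} \<or> j \<notin> {1..d}) \<longrightarrow> M i j = 0)
      \<and> (\<forall>i j. M i j = - M j i)}"

definition Orth :: "nat \<Rightarrow> (nat \<Rightarrow> nat \<Rightarrow> 'a::comm_ring_1) set" where
  "Orth d = {A. (\<forall>i j. (i \<notin> {1..d} \<or> j \<notin> {1..d}) \<longrightarrow> A i j = 0)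
      \<and> (\<forall>i\<in>{1..d}. \<forall>j\<in>{1..d}. (\<Sum>k=1..d. A i k * A j k) = (if i = j then 1 else 0))}"

definition act :: "nat \<Rightarrow> (nat \<Rightarrow> nat \<Rightarrow> 'a::comm_ring_1) \<Rightarrow> 'a pt \<Rightarrow> 'a pt" where
  "act d A x = ((\<lambda>i. \<Sum>j=1..d. A i j * fst x j),
               (\<lambda>i j. \<Sum>k=1..d. \<Sum>l=1..d. A i k * snd x k l * A j l))"

definition idm :: "nat \<Rightarrow> nat \<Rightarrow> nat \<Rightarrow> 'a::comm_ring_1" where
  "idm d = (\<lambda>i j. if i = j \<and> i \<in> {1..d} then 1 else 0)"

inductive_set polyfun :: "('a::comm_ring_1 pt \<Rightarrow> 'a) set" where
  pconst: "(\<lambda>x. c) \<in> polyfun"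
| pvc: "(\<lambda>x. fst x i) \<in> polyfun"
| pmc: "(\<lambda>x. snd x i j) \<in> polyfun"
| padd: "p \<in> polyfun \<Longrightarrow> q \<in> polyfun \<Longrightarrow> (\<lambda>x. p x + q x) \<in> polyfun"
| pmult: "p \<in> polyfun \<Longrightarrow> q \<in> polyfun \<Longrightarrow> (\<lambda>x. p x * q x) \<in> polyfun"

definition nonzero_on :: "'a pt set \<Rightarrow> ('a pt \<Rightarrow> 'a::comm_ring_1) \<Rightarrow> bool" where
  "nonzero_on S q = (\<exists>x\<in>S. q x \<noteq> 0)"

text \<open>(p, q) is a representative p/q of a rational function on V.\<close>
definition ratrep :: "nat \<Rightarrow> ('a pt \<Rightarrow> 'a::comm_ring_1) \<Rightarrow> ('a pt \<Rightarrow> 'a) \<Rightarrow> bool" where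
  "ratrep d p q = (p \<in> polyfun \<and> q \<in> polyfun \<and> nonzero_on (Vsp d) q)"

definition ratequiv :: "nat \<Rightarrow> ('a pt \<Rightarrow> 'a::comm_ring_1) \<Rightarrow> ('a pt \<Rightarrow> 'a)
    \<Rightarrow> ('a pt \<Rightarrow> 'a) \<Rightarrow> ('a pt \<Rightarrow> 'a) \<Rightarrow> bool" where
  "ratequiv d p q p' q' = (\<forall>x\<in>Vsp d. p x * q' x = p' x * q x)"

definition invariant :: "nat \<Rightarrow> ('a pt \<Rightarrow> 'a::comm_ring_1) \<Rightarrow> ('a pt \<Rightarrow> 'a) \<Rightarrow> bool" where
  "invariant d p q = (\<forall>A\<in>Orth d. \<forall>x\<in>Vsp d. p (act d A x) * q x = p x * q (act d A x))"

definition restricts_to :: "'a pt set \<Rightarrow> ('a pt \<Rightarrow> 'a::comm_ring_1) \<Rightarrow> ('a pt \<Rightarrow> 'a)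
    \<Rightarrow> ('a pt \<Rightarrow> 'a) \<Rightarrow> bool" where
  "restricts_to S p q g = (nonzero_on S q \<and> (\<forall>x\<in>S. p x = g x * q x))"

text \<open>The slices L^(i), 1 <= i <= d-1 (L^(0) := V is only an auxiliary value).\<close>
fun Lsl :: "nat \<Rightarrow> nat \<Rightarrow> complex pt set" where
  "Lsl d 0 = Vsp d"
| "Lsl d (Suc i) =
     (if i = 0 then {x \<in> Vsp d. \<forall>k\<in>{1..d-1}. fst x k = 0}
      else Lsl d i \<inter> {x. \<forall>k\<in>{1..d - Suc i}. snd x k (d - Suc i + 2) = 0})"

text \<open>The prescribed values: f_1 = sum c_i^2 on V; for 2 <= i <= d-1 the restriction
  of f_i to L^(i-1) is c_{1(d-i+2)}^2 + ... + c_{(d-i+1)(d-i+2)}^2; for i = d this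
  formula reads c_12^2, which is the prescribed restriction of f_d to L^(d-1).\<close>
definition gfun :: "nat \<Rightarrow> nat \<Rightarrow> complex pt \<Rightarrow> complex" where
  "gfun d i = (if i = 1 then (\<lambda>x. \<Sum>k=1..d. (fst x k)^2)
               else (\<lambda>x. \<Sum>k=1..d-i+1. (snd x k (d-i+2))^2))"

definition frep :: "nat \<Rightarrow> nat \<Rightarrow> ((complex pt \<Rightarrow> complex) \<times> (complex pt \<Rightarrow> complex)) set" where
  "frep d i = {(p, q). ratrep d p q \<and>
     (if i = 1 then ratequiv d p q (gfun d 1) (\<lambda>x. 1)
      else (\<exists>p' q'. ratrep d p' q' \<and> ratequiv d p q p' q' \<and> invariant d p' q'
                    \<and> restricts_to (Lsl d (i - 1)) p' q' (gfun d i)))}"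

text \<open>U_d(C): points in the domain of every f_k (some representative has nonzero
  denominator there) with prod f_k nonzero.\<close>
definition Ucx :: "nat \<Rightarrow> complex pt set" where
  "Ucx d = {x \<in> Vsp d. \<forall>k\<in>{1..d}. \<exists>(p, q)\<in>frep d k. q x \<noteq> 0 \<and> p x \<noteq> 0}"

definition embed :: "real pt \<Rightarrow> complex pt" where
  "embed x = ((\<lambda>i. complex_of_real (fst x i)), (\<lambda>i j. complex_of_real (snd x i j)))"

definition Ure :: "nat \<Rightarrow> real pt set" where
  "Ure d = {x. embed x \<in> Ucx d}"

end

theory Submission
  imports Defs "Jordan_Normal_Form.Determinant" "HOL-Computational_Algebra.Polynomial"
begin


definition mm :: "nat \<Rightarrow> (nat\<Rightarrow>nat\<Rightarrow>'a::comm_ring_1) \<Rightarrow> (nat\<Rightarrow>nat\<Rightarrow>'a) \<Rightarrow> nat\<Rightarrow>nat\<Rightarrow>'a" where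
  "mm d A B = (\<lambda>i j. \<Sum>k=1..d. A i k * B k j)"
definition tr :: "(nat\<Rightarrow>nat\<Rightarrow>'a) \<Rightarrow> nat\<Rightarrow>nat\<Rightarrow>'a" where "tr A = (\<lambda>i j. A j i)"
definition mv :: "nat \<Rightarrow> (nat\<Rightarrow>nat\<Rightarrow>'a::comm_ring_1) \<Rightarrow> (nat\<Rightarrow>'a) \<Rightarrow> nat\<Rightarrow>'a" where
  "mv d A v = (\<lambda>i. \<Sum>j=1..d. A i j * v j)"
definition supp :: "nat \<Rightarrow> (nat\<Rightarrow>nat\<Rightarrow>'a::zero) \<Rightarrow> bool" where
  "supp d A = (\<forall>i j. (i \<notin> {1..d} \<or> j \<notin> {1..d}) \<longrightarrow> A i j = 0)"
definition O2 :: "nat \<Rightarrow> (nat\<Rightarrow>nat\<Rightarrow>'a::comm_ring_1) set" where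
  "O2 d = {C. supp d C \<and> mm d C (tr C) = idm d \<and> mm d (tr C) C = idm d}"

lemma tr_tr[simp]: "tr (tr A) = A" by (simp add: tr_def)
lemma supp_tr: "supp d A \<Longrightarrow> supp d (tr A)" by (auto simp: supp_def tr_def)
lemma supp_idm: "supp d (idm d)" by (auto simp: supp_def idm_def)
lemma supp_mm: "supp d A \<Longrightarrow> supp d B \<Longrightarrow> supp d (mm d A B)"
  by (auto simp: supp_def mm_def)

lemma mm_assoc: "mm d (mm d A B) C = mm d A (mm d B C)"
  unfolding mm_def
  apply (rule ext)+
  apply (simp add: sum_distrib_left sum_distrib_right mult.assoc)
  apply (rule sum.swap)
  done

lemma tr_mm: "tr (mm d A B) = mm d (tr B) (tr A)"
  by (auto simp: tr_def mm_def mult.commute intro!: ext)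

lemma mm_idm_left: "supp d B \<Longrightarrow> mm d (idm d) B = B"
proof (rule ext, rule ext)
  fix i j assume s: "supp d B"
  show "mm d (idm d) B i j = B i j"
  proof (cases "i \<in> {1..d}")
    case True
    have "mm d (idm d) B i j = (\<Sum>k=1..d. if k = i then B k j else 0)"
      unfolding mm_def idm_def by (rule sum.cong) auto
    also have "\<dots> = B i j" using True by (simp add: sum.delta)
    finally show ?thesis .
  next
    case False
    then have "\<And>k. idm d i k = (0::'a)" by (simp add: idm_def)
    then have "mm d (idm d) B i j = 0" unfolding mm_def by simp
    moreover have "B i j = 0" using s False unfolding supp_def by blast
    ultimately show ?thesis by simp
  qed
qed

lemma mm_idm_right: "supp d B \<Longrightarrow> mm d B (idm d) = B"
proof -
  assume "supp d B"
  then have "mm d (idm d) (tr B) = tr B" by (simp add: mm_idm_left supp_tr)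
  then have "tr (mm d (idm d) (tr B)) = B" by simp
  moreover have "tr (idm d) = (idm d :: nat\<Rightarrow>nat\<Rightarrow>'a)" by (auto simp: tr_def idm_def intro!: ext)
  ultimately show ?thesis by (simp add: tr_mm)
qed

lemma mv_mv: "mv d A (mv d B v) = mv d (mm d A B) v"
  unfolding mv_def mm_def
  apply (rule ext)+
  apply (simp add: sum_distrib_left sum_distrib_right mult.assoc)
  apply (rule sum.swap)
  done

lemma mv_idm: "(\<forall>i. i \<notin> {1..d} \<longrightarrow> v i = 0) \<Longrightarrow> mv d (idm d) v = v"
proof (rule ext)
  fix i assume s: "\<forall>i. i \<notin> {1..d} \<longrightarrow> v i = 0"
  show "mv d (idm d) v i = v i"
  proof (cases "i \<in> {1..d}")
    case True
    have "mv d (idm d) v i = (\<Sum>k=1..d. if k = i then v k else 0)"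
      unfolding mv_def idm_def by (rule sum.cong) auto
    also have "\<dots> = v i" using True by (simp add: sum.delta)
    finally show ?thesis .
  next
    case False
    then have "\<And>k. idm d i k = (0::'a)" by (simp add: idm_def)
    then have "mv d (idm d) v i = 0" unfolding mv_def by simp
    moreover have "v i = 0" using s False by blast
    ultimately show ?thesis by simp
  qed
qed

lemma act_eq: "act d A x = (mv d A (fst x), mm d (mm d A (snd x)) (tr A))"
  unfolding act_def mv_def mm_def tr_def
  apply (simp add: sum_distrib_right)
  apply (rule ext)+
  apply (rule sum.swap)
  done

lemma act_act: "act d A (act d B x) = act d (mm d A B) x"
  by (simp add: act_eq mv_mv mm_assoc tr_mm)

lemma Vsp_iff: "x \<in> Vsp d \<longleftrightarrow> (\<forall>i. i \<notin> {1..d} \<longrightarrow> fst x i = 0)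
      \<and> (\<forall>i j. (i \<notin> {1..d} \<or> j \<notin> {1..d}) \<longrightarrow> snd x i j = 0)
      \<and> (\<forall>i j. snd x i j = - snd x j i)"
  by (cases x) (simp add: Vsp_def)

lemma Vsp_supp: "x \<in> Vsp d \<Longrightarrow> supp d (snd x)"
  unfolding Vsp_iff supp_def by blast

lemma Vsp_fst: "x \<in> Vsp d \<Longrightarrow> i \<notin> {1..d} \<Longrightarrow> fst x i = 0"
  unfolding Vsp_iff by blast

lemma Vsp_snd0: "x \<in> Vsp d \<Longrightarrow> i \<notin> {1..d} \<or> j \<notin> {1..d} \<Longrightarrow> snd x i j = 0"
  unfolding Vsp_iff by blast

lemma VspI: "(\<And>i. i \<notin> {1..d} \<Longrightarrow> fst x i = 0) \<Longrightarrow>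
   (\<And>i j. i \<notin> {1..d} \<or> j \<notin> {1..d} \<Longrightarrow> snd x i j = 0) \<Longrightarrow>
   (\<And>i j. snd x i j = - snd x j i) \<Longrightarrow> x \<in> Vsp d"
  unfolding Vsp_iff by blast

lemma Vsp_skew: "x \<in> Vsp d \<Longrightarrow> snd x i j = - snd x j i"
  unfolding Vsp_iff by blast

lemma tr_idm: "tr (idm d) = (idm d :: nat\<Rightarrow>nat\<Rightarrow>'a::comm_ring_1)"
  by (auto simp: tr_def idm_def intro!: ext)

lemma act_idm: "x \<in> Vsp d \<Longrightarrow> act d (idm d) x = x"
proof -
  assume x: "x \<in> Vsp d"
  have "mv d (idm d) (fst x) = fst x" using Vsp_fst[OF x] by (intro mv_idm) blast
  moreover have "mm d (mm d (idm d) (snd x)) (tr (idm d)) = snd x"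
    using Vsp_supp[OF x] by (simp add: tr_idm mm_idm_left mm_idm_right)
  ultimately show ?thesis by (simp add: act_eq prod_eq_iff)
qed

lemma O2_tr: "C \<in> O2 d \<Longrightarrow> tr C \<in> O2 d" by (auto simp: O2_def supp_tr)

lemma O2_mm: "A \<in> O2 d \<Longrightarrow> B \<in> O2 d \<Longrightarrow> mm d A B \<in> O2 d"
proof -
  assume A: "A \<in> O2 d" and B: "B \<in> O2 d"
  have sA: "supp d A" and sB: "supp d B" using A B by (auto simp: O2_def)
  have "mm d (mm d A B) (tr (mm d A B)) = mm d A (mm d (mm d B (tr B)) (tr A))"
    by (simp add: tr_mm mm_assoc)
  also have "\<dots> = idm d" using A B sA by (simp add: O2_def mm_idm_left supp_tr)
  finally have 1: "mm d (mm d A B) (tr (mm d A B)) = idm d" .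
  have "mm d (tr (mm d A B)) (mm d A B) = mm d (tr B) (mm d (mm d (tr A) A) B)"
    by (simp add: tr_mm mm_assoc)
  also have "\<dots> = idm d" using A B sB by (simp add: O2_def mm_idm_left)
  finally show ?thesis using 1 supp_mm[OF sA sB] by (simp add: O2_def)
qed

lemma O2_idm: "idm d \<in> O2 d"
proof -
  have t: "tr (idm d) = (idm d :: nat\<Rightarrow>nat\<Rightarrow>'a)" by (auto simp: tr_def idm_def intro!: ext)
  show ?thesis by (simp add: O2_def t mm_idm_left supp_idm)
qed

lemma Orth_iff: "C \<in> Orth d \<longleftrightarrow> supp d C \<and> mm d C (tr C) = idm d"
proof
  assume C: "C \<in> Orth d"
  then have s: "supp d C" by (auto simp: Orth_def supp_def)
  have "mm d C (tr C) i j = idm d i j" for i j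
  proof (cases "i \<in> {1..d} \<and> j \<in> {1..d}")
    case True then show ?thesis using C by (simp add: Orth_def mm_def tr_def idm_def)
  next
    case False
    then have "\<And>k. C i k * C j k = 0" using s by (auto simp: supp_def)
    then show ?thesis using False by (auto simp: mm_def tr_def idm_def)
  qed
  then show "supp d C \<and> mm d C (tr C) = idm d" using s by auto
next
  assume a: "supp d C \<and> mm d C (tr C) = idm d"
  then have "\<forall>i\<in>{1..d}. \<forall>j\<in>{1..d}. mm d C (tr C) i j = idm d i j" by simp
  then show "C \<in> Orth d" using a by (auto simp: Orth_def supp_def mm_def tr_def idm_def)
qed

lemma O2_Orth: "C \<in> O2 d \<Longrightarrow> C \<in> Orth d" by (simp add: O2_def Orth_iff)




lemma act_Vsp: "x \<in> Vsp d \<Longrightarrow> supp d A \<Longrightarrow> act d A x \<in> Vsp d"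
proof -
  assume x: "x \<in> Vsp d" and A: "supp d A"
  obtain v M where xe: "x = (v, M)" by (cases x)
  have sk: "M k l = - M l k" for k l using Vsp_skew[OF x, of k l] xe by simp
  have 1: "\<forall>i. i \<notin> {1..d} \<longrightarrow> (\<Sum>j=1..d. A i j * v j) = 0" using A by (auto simp: supp_def)
  have 2: "\<forall>i j. (i \<notin> {1..d} \<or> j \<notin> {1..d}) \<longrightarrow> (\<Sum>k=1..d. \<Sum>l=1..d. A i k * M k l * A j l) = 0"
    using A by (auto simp: supp_def)
  have 3: "(\<Sum>k=1..d. \<Sum>l=1..d. A i k * M k l * A j l) = - (\<Sum>k=1..d. \<Sum>l=1..d. A j k * M k l * A i l)" for i j
  proof -
    have "(\<Sum>k=1..d. \<Sum>l=1..d. A i k * M k l * A j l) = (\<Sum>l=1..d. \<Sum>k=1..d. A i k * M k l * A j l)"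
      by (rule sum.swap)
    also have "\<dots> = (\<Sum>l=1..d. \<Sum>k=1..d. - (A j l * M l k * A i k))"
    proof (intro sum.cong refl)
      fix l k show "A i k * M k l * A j l = - (A j l * M l k * A i k)"
        using sk[of k l] by (simp add: algebra_simps)
    qed
    finally show ?thesis by (simp add: sum_negf)
  qed
  show ?thesis unfolding xe act_def Vsp_iff fst_conv snd_conv
    using 1 2 3 by blast
qed

definition toM :: "nat \<Rightarrow> (nat\<Rightarrow>nat\<Rightarrow>'a::comm_ring_1) \<Rightarrow> 'a mat" where
  "toM d X = mat d d (\<lambda>(i,j). X (Suc i) (Suc j))"

lemma toM_mult: "toM d X * toM d Y = toM d (mm d X Y)"
proof (rule eq_matI)
  fix i j assume i: "i < dim_row (toM d (mm d X Y))" and j: "j < dim_col (toM d (mm d X Y))"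
  then have i': "i < d" and j': "j < d" by (auto simp: toM_def)
  have "(toM d X * toM d Y) $$ (i, j) = (\<Sum>k\<in>{0..<d}. X (Suc i) (Suc k) * Y (Suc k) (Suc j))"
    using i' j' by (simp add: toM_def scalar_prod_def)
  also have "\<dots> = (\<Sum>k\<in>{Suc 0..<Suc d}. X (Suc i) k * Y k (Suc j))"
    by (rule sum.shift_bounds_Suc_ivl[symmetric])
  also have "{Suc 0..<Suc d} = {1..d}" by auto
  finally show "(toM d X * toM d Y) $$ (i, j) = toM d (mm d X Y) $$ (i, j)"
    using i' j' by (simp add: toM_def mm_def)
qed (auto simp: toM_def)

lemma toM_idm: "toM d (idm d) = 1\<^sub>m d"
  by (rule eq_matI) (auto simp: toM_def idm_def)

lemma toM_inj: "supp d X \<Longrightarrow> supp d Y \<Longrightarrow> toM d X = toM d Y \<Longrightarrow> X = Y"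
proof (rule ext, rule ext)
  fix i j assume sX: "supp d X" and sY: "supp d Y" and e: "toM d X = toM d Y"
  show "X i j = Y i j"
  proof (cases "i \<in> {1..d} \<and> j \<in> {1..d}")
    case True
    then obtain i' j' where "i = Suc i'" "j = Suc j'" "i' < d" "j' < d"
      by (metis Suc_le_eq atLeastAtMost_iff not0_implies_Suc not_one_le_zero)
    then show ?thesis using arg_cong[OF e, of "\<lambda>m. m $$ (i', j')"] by (simp add: toM_def)
  next
    case False then show ?thesis using sX sY by (auto simp: supp_def)
  qed
qed

lemma mm_inv_comm:
  fixes A B :: "nat\<Rightarrow>nat\<Rightarrow>'a::field"
  assumes sA: "supp d A" and sB: "supp d B" and AB: "mm d A B = idm d"
  shows "mm d B A = idm d"
proof -
  have c: "toM d A \<in> carrier_mat d d" "toM d B \<in> carrier_mat d d" by (auto simp: toM_def)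
  have "toM d A * toM d B = 1\<^sub>m d" by (simp add: toM_mult AB toM_idm)
  then have "toM d B * toM d A = 1\<^sub>m d" by (rule mat_mult_left_right_inverse[OF c])
  then have "toM d (mm d B A) = toM d (idm d)" by (simp add: toM_mult toM_idm)
  then show ?thesis by (rule toM_inj[OF supp_mm[OF sB sA] supp_idm])
qed

lemma Orth_O2:
  fixes C :: "nat\<Rightarrow>nat\<Rightarrow>'a::field"
  shows "C \<in> Orth d \<Longrightarrow> C \<in> O2 d"
  using mm_inv_comm[of d C "tr C"] by (auto simp: Orth_iff O2_def supp_tr)



definition lpt :: "'a::comm_ring_1 pt \<Rightarrow> 'a pt \<Rightarrow> 'a \<Rightarrow> 'a pt" where
  "lpt a b t = ((\<lambda>i. fst a i + t * fst b i), (\<lambda>i j. snd a i j + t * snd b i j))"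

definition dpt :: "'a::comm_ring_1 pt \<Rightarrow> 'a pt \<Rightarrow> 'a pt" where
  "dpt a b = ((\<lambda>i. fst a i - fst b i), (\<lambda>i j. snd a i j - snd b i j))"

lemma polyfun_line:
  fixes p :: "'a::comm_ring_1 pt \<Rightarrow> 'a"
  assumes "p \<in> polyfun" shows "\<exists>P. \<forall>t. p (lpt a b t) = poly P t"
  using assms
proof induction
  case (pconst c) show ?case by (rule exI[of _ "[:c:]"]) simp
next
  case (pvc i) show ?case by (rule exI[of _ "[:fst a i, fst b i:]"]) (simp add: lpt_def)
next
  case (pmc i j) show ?case by (rule exI[of _ "[:snd a i j, snd b i j:]"]) (simp add: lpt_def)
next
  case (padd p q)
  then obtain P Q where "\<forall>t. p (lpt a b t) = poly P t" "\<forall>t. q (lpt a b t) = poly Q t" by blast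
  then show ?case by (intro exI[of _ "P + Q"]) simp
next
  case (pmult p q)
  then obtain P Q where "\<forall>t. p (lpt a b t) = poly P t" "\<forall>t. q (lpt a b t) = poly Q t" by blast
  then show ?case by (intro exI[of _ "P * Q"]) simp
qed

lemma polyfun_line_finite:
  fixes p :: "'a::idom pt \<Rightarrow> 'a"
  assumes "p \<in> polyfun" "p (lpt a b t0) \<noteq> 0"
  shows "finite {t. p (lpt a b t) = 0}"
proof -
  obtain P where P: "\<forall>t. p (lpt a b t) = poly P t" using polyfun_line[OF assms(1)] by blast
  then have "P \<noteq> 0" using assms(2) by auto
  then show ?thesis using P poly_roots_finite[of P] by simp
qed

lemma avoid_finite:
  fixes F :: "complex set"
  assumes "finite F" "\<delta> > 0"
  shows "\<exists>s::real. 0 < s \<and> s < \<delta> \<and> complex_of_real s \<notin> F"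
proof -
  have "finite {s::real. complex_of_real s \<in> F}"
    using finite_vimageI[OF assms(1), of complex_of_real] inj_of_real by (simp add: vimage_def)
  moreover have "infinite {0<..<\<delta>}" using assms(2) by simp
  ultimately have "infinite ({0<..<\<delta>} - {s::real. complex_of_real s \<in> F})"
    by (rule Diff_infinite_finite)
  then obtain s where "s \<in> {0<..<\<delta>} - {s::real. complex_of_real s \<in> F}"
    using infinite_imp_nonempty by blast
  then show ?thesis by auto
qed

lemma embed_lpt: "embed (lpt a b s) = lpt (embed a) (embed b) (complex_of_real s)"
  by (simp add: embed_def lpt_def)

lemma embed_dpt: "embed (dpt a b) = dpt (embed a) (embed b)"
  by (simp add: embed_def dpt_def)

lemma lpt_Vsp: assumes a: "a \<in> Vsp d" and b: "b \<in> Vsp d" shows "lpt a b t \<in> Vsp d"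
proof (rule VspI)
  fix i assume "i \<notin> {1..d}" then show "fst (lpt a b t) i = 0"
    using Vsp_fst[OF a] Vsp_fst[OF b] by (simp add: lpt_def)
next
  fix i j assume "i \<notin> {1..d} \<or> j \<notin> {1..d}" then show "snd (lpt a b t) i j = 0"
    using Vsp_snd0[OF a] Vsp_snd0[OF b] by (simp add: lpt_def)
next
  fix i j show "snd (lpt a b t) i j = - snd (lpt a b t) j i"
    using Vsp_skew[OF a, of i j] Vsp_skew[OF b, of i j] by (simp add: lpt_def algebra_simps)
qed

lemma dpt_Vsp: assumes a: "a \<in> Vsp d" and b: "b \<in> Vsp d" shows "dpt a b \<in> Vsp d"
proof (rule VspI)
  fix i assume "i \<notin> {1..d}" then show "fst (dpt a b) i = 0"
    using Vsp_fst[OF a] Vsp_fst[OF b] by (simp add: dpt_def)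
next
  fix i j assume "i \<notin> {1..d} \<or> j \<notin> {1..d}" then show "snd (dpt a b) i j = 0"
    using Vsp_snd0[OF a] Vsp_snd0[OF b] by (simp add: dpt_def)
next
  fix i j show "snd (dpt a b) i j = - snd (dpt a b) j i"
    using Vsp_skew[OF a, of i j] Vsp_skew[OF b, of i j] by (simp add: dpt_def algebra_simps)
qed

lemma lpt_dpt_1: "lpt a (dpt b a) 1 = b" by (simp add: lpt_def dpt_def)
lemma lpt_0: "lpt a b 0 = a" by (simp add: lpt_def)

lemma act_lpt: "act d B (lpt a b t) = lpt (act d B a) (act d B b) t"
  unfolding act_def lpt_def by (simp add: algebra_simps sum.distrib sum_distrib_left)

definition embM :: "(nat\<Rightarrow>nat\<Rightarrow>real) \<Rightarrow> nat\<Rightarrow>nat\<Rightarrow>complex" where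
  "embM B = (\<lambda>i j. complex_of_real (B i j))"

lemma act_embed: "act d (embM B) (embed z) = embed (act d B z)"
  by (simp add: act_def embM_def embed_def)

lemma embed_Vsp: "embed z \<in> Vsp d \<longleftrightarrow> z \<in> Vsp d"
  unfolding Vsp_iff by (simp add: embed_def)

lemma embM_Orth: "B \<in> Orth d \<Longrightarrow> embM B \<in> Orth d"
proof -
  assume B: "B \<in> Orth d"
  show ?thesis unfolding Orth_def embM_def
  proof (intro CollectI conjI ballI allI impI)
    fix i j assume "i \<notin> {1..d} \<or> j \<notin> {1..d}"
    then show "complex_of_real (B i j) = 0" using B by (simp add: Orth_def)
  next
    fix i j assume "i \<in> {1..d}" "j \<in> {1..d}"
    then have "(\<Sum>k=1..d. B i k * B j k) = (if i = j then 1 else 0)" using B by (simp add: Orth_def)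
    then have "complex_of_real (\<Sum>k=1..d. B i k * B j k) = (if i = j then 1 else 0)" by simp
    then show "(\<Sum>k=1..d. complex_of_real (B i k) * complex_of_real (B j k)) = (if i = j then 1 else 0)"
      by simp
  qed
qed

definition Hs :: "nat \<Rightarrow> nat \<Rightarrow> ('a::zero) pt \<Rightarrow> bool" where
  "Hs d j x = ((\<forall>k\<in>{1..d-1}. fst x k = 0) \<and>
      (\<forall>i\<in>{1..j-1}. \<forall>k\<in>{1..d - Suc i}. snd x k (d - Suc i + 2) = 0))"

lemma Lsl_Hs: "1 \<le> j \<Longrightarrow> Lsl d j = {x \<in> Vsp d. Hs d j x}"
proof (induction j)
  case 0 then show ?case by simp
next
  case (Suc j)
  show ?case
  proof (cases "j = 0")
    case True then show ?thesis by (auto simp: Hs_def)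
  next
    case False
    then have IH: "Lsl d j = {x \<in> Vsp d. Hs d j x}" using Suc by simp
    have e: "{1..Suc j - 1} = insert j {1..j - 1}" using False by auto
    have "Hs d (Suc j) x \<longleftrightarrow> Hs d j x \<and> (\<forall>k\<in>{1..d - Suc j}. snd x k (d - Suc j + 2) = 0)" for x :: "complex pt"
      unfolding Hs_def e by auto
    then show ?thesis using False IH by auto
  qed
qed

lemma Hs_embed: "Hs d j (embed z) \<longleftrightarrow> Hs d j z"
  by (simp add: Hs_def embed_def)

lemma Hs_lpt: "Hs d j a \<Longrightarrow> Hs d j b \<Longrightarrow> Hs d j (lpt a b t)"
  by (simp add: Hs_def lpt_def)

lemma Hs_dpt: "Hs d j a \<Longrightarrow> Hs d j b \<Longrightarrow> Hs d j (dpt a b)"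
  by (simp add: Hs_def dpt_def)

lemma Hs_Suc: "Hs d (Suc j) x \<Longrightarrow> Hs d j x"
  by (auto simp: Hs_def)



definition ptlim :: "(nat \<Rightarrow> 'a::topological_space pt) \<Rightarrow> 'a pt \<Rightarrow> bool" where
  "ptlim Y y = ((\<forall>i. (\<lambda>n. fst (Y n) i) \<longlonglongrightarrow> fst y i) \<and> (\<forall>i j. (\<lambda>n. snd (Y n) i j) \<longlonglongrightarrow> snd y i j))"

lemma polyfun_cont:
  fixes p :: "'a::real_normed_field pt \<Rightarrow> 'a"
  assumes "p \<in> polyfun" and Y: "ptlim Y y"
  shows "(\<lambda>n. p (Y n)) \<longlonglongrightarrow> p y"
  using assms(1)
proof induction
  case (pconst c) show ?case by simp
next
  case (pvc i) show ?case using Y by (simp add: ptlim_def)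
next
  case (pmc i j) show ?case using Y by (simp add: ptlim_def)
next
  case (padd p q) then show ?case by (intro tendsto_add)
next
  case (pmult p q) then show ?case by (intro tendsto_mult)
qed

lemma ptlim_embed: "ptlim Y y \<Longrightarrow> ptlim (\<lambda>n. embed (Y n)) (embed y)"
  by (simp add: ptlim_def embed_def tendsto_of_real)

lemma polyfun_sum:
  assumes "finite S" shows "(\<forall>k\<in>S. f k \<in> polyfun) \<Longrightarrow> (\<lambda>x. \<Sum>k\<in>S. f k x) \<in> polyfun"
  using assms
proof (induction S rule: finite_induct)
  case empty
  then show ?case using polyfun.pconst[of 0] by simp
next
  case (insert a S)
  then have "(\<lambda>x. f a x + (\<Sum>k\<in>S. f k x)) \<in> polyfun" by (intro polyfun.padd) auto
  then show ?case using insert by simp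
qed

lemma gfun_polyfun: "gfun d i \<in> polyfun"
proof -
  have a: "(\<lambda>x::complex pt. (fst x k)^2) \<in> polyfun" for k
    unfolding power2_eq_square by (intro polyfun.pmult polyfun.pvc)
  have b: "(\<lambda>x::complex pt. (snd x k l)^2) \<in> polyfun" for k l
    unfolding power2_eq_square by (intro polyfun.pmult polyfun.pmc)
  show ?thesis unfolding gfun_def
    using polyfun_sum[of "{1..d}" "\<lambda>k x. (fst x k)^2"] polyfun_sum[of "{1..d-i+1}" "\<lambda>k x. (snd x k (d-i+2))^2"] a b
    by auto
qed

lemma ptlim_act:
  fixes C :: "nat \<Rightarrow> nat \<Rightarrow> nat \<Rightarrow> 'a::real_normed_field"
  assumes C: "\<And>i j. (\<lambda>n. C n i j) \<longlonglongrightarrow> C0 i j" and Y: "ptlim Y y"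
  shows "ptlim (\<lambda>n. act d (C n) (Y n)) (act d C0 y)"
  using C Y unfolding ptlim_def act_def
  by (auto intro!: tendsto_sum tendsto_mult)

lemma lim_zero: "\<forall>n. f n = (0::'a::{t2_space,zero}) \<Longrightarrow> f \<longlonglongrightarrow> L \<Longrightarrow> L = 0"
proof -
  assume "\<forall>n. f n = 0" "f \<longlonglongrightarrow> L"
  then have "(\<lambda>n. 0::'a) \<longlonglongrightarrow> L" by (metis (no_types) ext)
  then show ?thesis by (metis LIMSEQ_unique tendsto_const)
qed

lemma ptlim_Vsp:
  fixes Y :: "nat \<Rightarrow> 'a::{real_normed_vector,comm_ring_1} pt"
  assumes Y: "ptlim Y y" and V: "\<forall>n. Y n \<in> Vsp d" shows "y \<in> Vsp d"
proof (rule VspI)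
  fix i assume i: "i \<notin> {1..d}"
  have "\<forall>n. fst (Y n) i = 0" using V Vsp_fst[OF _ i] by blast
  then show "fst y i = 0" by (rule lim_zero) (use Y in \<open>simp add: ptlim_def\<close>)
next
  fix i j assume ij: "i \<notin> {1..d} \<or> j \<notin> {1..d}"
  have "\<forall>n. snd (Y n) i j = 0" using V Vsp_snd0[OF _ ij] by blast
  then show "snd y i j = 0" by (rule lim_zero) (use Y in \<open>simp add: ptlim_def\<close>)
next
  fix i j
  have 1: "(\<lambda>n. snd (Y n) i j) \<longlonglongrightarrow> snd y i j" using Y by (simp add: ptlim_def)
  have 2: "(\<lambda>n. - snd (Y n) j i) \<longlonglongrightarrow> - snd y j i" using Y by (intro tendsto_minus) (simp add: ptlim_def)
  have "(\<lambda>n. snd (Y n) i j) = (\<lambda>n. - snd (Y n) j i)" using V Vsp_skew by blast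
  then show "snd y i j = - snd y j i" using 1 2 LIMSEQ_unique by metis
qed

lemma ptlim_Hs:
  fixes Y :: "nat \<Rightarrow> 'a::{real_normed_vector} pt"
  assumes Y: "ptlim Y y" and H: "\<forall>n. Hs d k (Y n)" shows "Hs d k y"
  unfolding Hs_def
proof (intro conjI ballI)
  fix i assume i: "i \<in> {1..d-1}"
  have "\<forall>n. fst (Y n) i = 0" using H i unfolding Hs_def by blast
  then show "fst y i = 0" by (rule lim_zero) (use Y in \<open>simp add: ptlim_def\<close>)
next
  fix i l assume i: "i \<in> {1..k-1}" and l: "l \<in> {1..d - Suc i}"
  have "\<forall>n. snd (Y n) l (d - Suc i + 2) = 0" using H i l unfolding Hs_def by blast
  then show "snd y l (d - Suc i + 2) = 0" by (rule lim_zero) (use Y in \<open>simp add: ptlim_def\<close>)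
qed

lemma O2_bound:
  fixes C :: "nat \<Rightarrow> nat \<Rightarrow> real"
  assumes C: "C \<in> O2 d" shows "\<bar>C i j\<bar> \<le> 1"
proof (cases "i \<in> {1..d} \<and> j \<in> {1..d}")
  case True
  have "mm d C (tr C) i i = idm d i i" using C by (simp add: O2_def)
  then have s: "(\<Sum>k=1..d. C i k * C i k) = 1" using True by (simp add: mm_def tr_def idm_def)
  have "C i j * C i j \<le> (\<Sum>k=1..d. C i k * C i k)"
    using True by (intro member_le_sum) auto
  then have "(C i j)^2 \<le> 1" using s by (simp add: power2_eq_square)
  then show ?thesis by (simp add: abs_square_le_1)
next
  case False then show ?thesis using C by (auto simp: O2_def supp_def)
qed

lemma finite_subseq:
  fixes X :: "nat \<Rightarrow> 'i \<Rightarrow> real"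
  assumes "finite F" and b: "\<And>n i. \<bar>X n i\<bar> \<le> 1"
  shows "\<exists>r. strict_mono r \<and> (\<forall>i\<in>F. convergent (\<lambda>n. X (r n) i))"
  using assms(1)
proof (induction F rule: finite_induct)
  case empty show ?case by (rule exI[of _ id]) (simp add: strict_mono_def)
next
  case (insert a F)
  then obtain r where r: "strict_mono r" "\<forall>i\<in>F. convergent (\<lambda>n. X (r n) i)" by blast
  obtain f where f: "strict_mono f" "monoseq (\<lambda>n. X (r (f n)) a)"
    using seq_monosub[of "\<lambda>n. X (r n) a"] by auto
  have "Bseq (\<lambda>n. X (r (f n)) a)" using b by (intro BseqI'[of _ 1]) simp
  then have ca: "convergent (\<lambda>n. X (r (f n)) a)" using f(2) Bseq_monoseq_convergent by blast
  have "convergent (\<lambda>n. X (r (f n)) i)" if "i \<in> F" for i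
    using convergent_subseq_convergent[OF r(2)[rule_format, OF that] f(1)] by (simp add: o_def)
  then show ?case using ca strict_mono_o[OF r(1) f(1)] by (intro exI[of _ "r \<circ> f"]) (auto simp: o_def)
qed



definition vsupp :: "nat \<Rightarrow> (nat \<Rightarrow> 'a::zero) \<Rightarrow> bool" where
  "vsupp d u = (\<forall>i. i \<notin> {1..d} \<longrightarrow> u i = 0)"
definition ip :: "nat \<Rightarrow> (nat \<Rightarrow> real) \<Rightarrow> (nat \<Rightarrow> real) \<Rightarrow> real" where
  "ip d u w = (\<Sum>l=1..d. u l * w l)"
definition hh :: "nat \<Rightarrow> (nat \<Rightarrow> real) \<Rightarrow> nat \<Rightarrow> nat \<Rightarrow> real" where
  "hh d w = (\<lambda>i j. idm d i j - 2 * w i * w j / ip d w w)"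
definition ev :: "nat \<Rightarrow> nat \<Rightarrow> real" where "ev t = (\<lambda>l. if l = t then 1 else 0)"

lemma sum_idm_right: "j \<in> {1..d} \<Longrightarrow> (\<Sum>k=1..d. f k * idm d k j) = (f j :: 'a::comm_ring_1)"
proof -
  assume j: "j \<in> {1..d}"
  have "(\<Sum>k=1..d. f k * idm d k j) = (\<Sum>k=1..d. if k = j then f k else 0)"
    by (rule sum.cong) (auto simp: idm_def)
  also have "\<dots> = f j" using j by simp
  finally show ?thesis .
qed

lemma sum_idm_vsupp: "vsupp d w \<Longrightarrow> (\<Sum>k=1..d. w k * idm d k j) = (w j :: 'a::comm_ring_1)"
proof (cases "j \<in> {1..d}")
  case True then show ?thesis by (rule sum_idm_right)
next
  case False
  assume "vsupp d w"
  then have "w j = 0" using False by (simp add: vsupp_def)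
  moreover have "idm d k j = (0::'a)" for k using False by (simp add: idm_def)
  ultimately show ?thesis by simp
qed

lemma ip_sq_zero: assumes "vsupp d w" "ip d w w = 0" shows "w i = 0"
proof (cases "i \<in> {1..d}")
  case True
  have "\<forall>l\<in>{1..d}. w l * w l = 0"
    using assms(2) unfolding ip_def by (subst sum_nonneg_eq_0_iff[symmetric]) auto
  then show ?thesis using True by simp
next
  case False then show ?thesis using assms(1) by (simp add: vsupp_def)
qed

lemma ip_pos: "vsupp d w \<Longrightarrow> ip d w w \<noteq> 0 \<Longrightarrow> ip d w w > 0"
proof -
  assume "ip d w w \<noteq> 0"
  moreover have "ip d w w \<ge> 0" unfolding ip_def by (simp add: sum_nonneg)
  ultimately show ?thesis by linarith
qed

lemma supp_hh: "vsupp d w \<Longrightarrow> supp d (hh d w)"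
  by (auto simp: supp_def hh_def idm_def vsupp_def)

lemma mv_hh: "vsupp d r \<Longrightarrow> mv d (hh d w) r = (\<lambda>i. r i - 2 * ip d w r / ip d w w * w i)"
proof (rule ext)
  fix i assume r: "vsupp d r"
  have "mv d (hh d w) r i = (\<Sum>j=1..d. idm d i j * r j) - (\<Sum>j=1..d. 2 * w i * w j / ip d w w * r j)"
    unfolding mv_def hh_def by (simp add: left_diff_distrib sum_subtractf)
  also have "(\<Sum>j=1..d. idm d i j * r j) = mv d (idm d) r i" by (simp add: mv_def)
  also have "\<dots> = r i" using r by (simp add: mv_idm vsupp_def)
  also have "(\<Sum>j=1..d. 2 * w i * w j / ip d w w * r j) = (\<Sum>j=1..d. (2 * w i / ip d w w) * (w j * r j))"
    by (rule sum.cong) (simp_all add: divide_inverse mult_ac)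
  also have "\<dots> = (2 * w i / ip d w w) * ip d w r" unfolding ip_def by (simp add: sum_distrib_left)
  also have "\<dots> = 2 * ip d w r / ip d w w * w i" by (simp add: divide_inverse mult_ac)
  finally show "mv d (hh d w) r i = r i - 2 * ip d w r / ip d w w * w i" .
qed

lemma mv_hh_fix: "vsupp d r \<Longrightarrow> ip d w r = 0 \<Longrightarrow> mv d (hh d w) r = r"
  by (simp add: mv_hh)

lemma tr_hh: "tr (hh d w) = hh d w"
  by (auto simp: tr_def hh_def idm_def intro!: ext)

lemma hh_O2: assumes w: "vsupp d w" and n: "ip d w w \<noteq> 0" shows "hh d w \<in> O2 d"
proof -
  have "mm d (hh d w) (hh d w) i j = idm d i j" for i j
  proof -
    define col where "col = (\<lambda>k. hh d w k j)"
    have vc: "vsupp d col" using w by (auto simp: col_def vsupp_def hh_def idm_def)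
    have "ip d w col = (\<Sum>k=1..d. w k * idm d k j - (2 * w j / ip d w w) * (w k * w k))"
      unfolding ip_def col_def hh_def
      by (rule sum.cong) (simp_all add: right_diff_distrib divide_inverse mult_ac)
    also have "\<dots> = (\<Sum>k=1..d. w k * idm d k j) - (2 * w j / ip d w w) * ip d w w"
      unfolding ip_def by (simp add: sum_subtractf sum_distrib_left)
    also have "\<dots> = - w j" using n sum_idm_vsupp[OF w] by simp
    finally have ic: "ip d w col = - w j" .
    have "mm d (hh d w) (hh d w) i j = mv d (hh d w) col i" by (simp add: mm_def mv_def col_def)
    also have "\<dots> = col i + 2 * w j / ip d w w * w i" using vc ic by (simp add: mv_hh)
    also have "\<dots> = idm d i j" by (simp add: col_def hh_def)
    finally show ?thesis .
  qed
  then have "mm d (hh d w) (hh d w) = idm d" by (intro ext)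
  then show ?thesis using supp_hh[OF w] by (simp add: O2_def tr_hh)
qed

lemma householder:
  fixes u :: "nat \<Rightarrow> real"
  assumes u: "vsupp d u" and t: "t \<in> {1..d}"
  defines "nu \<equiv> sqrt (ip d u u)"
  defines "w \<equiv> (\<lambda>l. u l - nu * ev t l)"
  assumes n: "ip d w w \<noteq> 0"
  shows "mv d (hh d w) u = (\<lambda>l. nu * ev t l)"
proof -
  have uu: "ip d u u \<ge> 0" unfolding ip_def by (simp add: sum_nonneg)
  have nn: "nu * nu = ip d u u" using uu by (simp add: nu_def)
  have e1: "(\<lambda>l. ev t l * u l) = (\<lambda>l. if l = t then u l else 0)" "(\<lambda>l. u l * ev t l) = (\<lambda>l. if l = t then u l else 0)"
    "(\<lambda>l. ev t l * ev t l) = (\<lambda>l. if l = t then 1 else 0)" by (auto simp: ev_def)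
  have eu: "ip d (ev t) u = u t" "ip d u (ev t) = u t" "ip d (ev t) (ev t) = 1"
    unfolding ip_def e1 using t by simp_all
  have ipl: "ip d (\<lambda>l. a l - c * b l) e = ip d a e - c * ip d b e" for a b e c
  proof -
    have "ip d (\<lambda>l. a l - c * b l) e = (\<Sum>l=1..d. a l * e l - c * (b l * e l))"
      unfolding ip_def by (rule sum.cong) (simp_all add: left_diff_distrib mult.assoc)
    then show ?thesis unfolding ip_def by (simp add: sum_subtractf sum_distrib_left)
  qed
  have ipr: "ip d e (\<lambda>l. a l - c * b l) = ip d e a - c * ip d e b" for a b e c
  proof -
    have "ip d e (\<lambda>l. a l - c * b l) = (\<Sum>l=1..d. e l * a l - c * (e l * b l))"
      unfolding ip_def by (rule sum.cong) (simp_all add: right_diff_distrib mult_ac)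
    then show ?thesis unfolding ip_def by (simp add: sum_subtractf sum_distrib_left)
  qed
  have wu: "ip d w u = nu * nu - nu * u t" unfolding w_def using ipl eu nn by simp
  have ww: "ip d w w = 2 * ip d w u"
    unfolding w_def ipl ipr wu using eu nn by (simp add: algebra_simps)
  have "mv d (hh d w) u = (\<lambda>l. u l - 2 * ip d w u / ip d w w * w l)" using u by (simp add: mv_hh)
  also have "2 * ip d w u / ip d w w = 1" using ww n by simp
  finally show ?thesis by (simp add: w_def)
qed

lemma vsupp_w: "vsupp d u \<Longrightarrow> t \<in> {1..d} \<Longrightarrow> vsupp d (\<lambda>l. u l - c * ev t l)"
  by (auto simp: vsupp_def ev_def)

lemma Hs_Suc_iff: "1 \<le> j \<Longrightarrow> Hs d (Suc j) x \<longleftrightarrow> Hs d j x \<and> (\<forall>k\<in>{1..d - Suc j}. snd x k (d - Suc j + 2) = 0)"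
proof -
  assume j: "1 \<le> j"
  have e: "{1..Suc j - 1} = insert j {1..j - 1}" using j by auto
  show ?thesis unfolding Hs_def e by auto
qed

lemma snd_act_col:
  assumes H: "\<forall>b\<in>{1..d}. H c b = idm d c b" and c: "c \<in> {1..d}"
  shows "snd (act d H z) l c = mv d H (\<lambda>a. snd z a c) l"
proof -
  have "snd (act d H z) l c = (\<Sum>k=1..d. H l k * (\<Sum>b=1..d. snd z k b * H c b))"
    by (simp add: act_def sum_distrib_left mult.assoc)
  also have "\<dots> = (\<Sum>k=1..d. H l k * (\<Sum>b=1..d. snd z k b * idm d b c))"
    using H by (intro sum.cong refl arg_cong2[where f="(*)"]) (auto simp: idm_def)
  also have "\<dots> = (\<Sum>k=1..d. H l k * snd z k c)"
  proof (rule sum.cong[OF refl])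
    fix k show "H l k * (\<Sum>b=1..d. snd z k b * idm d b c) = H l k * snd z k c"
      using sum_idm_right[OF c, of "\<lambda>b. snd z k b"] by simp
  qed
  finally show ?thesis by (simp add: mv_def)
qed

lemma hh_row: "w c = 0 \<Longrightarrow> hh d w c b = idm d c b"
  by (simp add: hh_def)



lemma mv_add: "mv d H (\<lambda>a. u a + r a) = (\<lambda>i. mv d H u i + mv d H r i)"
  by (simp add: mv_def distrib_left sum.distrib)

lemma vsupp_fst: "x \<in> Vsp d \<Longrightarrow> vsupp d (fst x)"
  unfolding vsupp_def using Vsp_fst by blast

lemma vsupp_col: "x \<in> Vsp d \<Longrightarrow> vsupp d (\<lambda>a. snd x a c)"
  unfolding vsupp_def using Vsp_snd0 by blast

lemma decomp_base:
  fixes y :: "real pt"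
  assumes y: "y \<in> Vsp d" and d: "1 \<le> d"
  shows "\<exists>C\<in>O2 d. act d C y \<in> Vsp d \<and> Hs d 1 (act d C y)"
proof -
  define v where "v = fst y"
  have vs: "vsupp d v" using vsupp_fst[OF y] by (simp add: v_def)
  have t: "d \<in> {1..d}" using d by simp
  define nu where "nu = sqrt (ip d v v)"
  define w where "w = (\<lambda>l. v l - nu * ev d l)"
  have ws: "vsupp d w" unfolding w_def by (rule vsupp_w[OF vs t])
  show ?thesis
  proof (cases "ip d w w = 0")
    case True
    then have "w l = 0" for l using ip_sq_zero[OF ws] by blast
    then have "fst y k = 0" if "k \<in> {1..d-1}" for k
      using that by (auto simp: w_def v_def ev_def dest: spec[of _ k])
    then have "Hs d 1 y" by (simp add: Hs_def)
    then show ?thesis using y O2_idm act_idm[OF y] by (intro bexI[of _ "idm d"]) auto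
  next
    case False
    have HO: "hh d w \<in> O2 d" by (rule hh_O2[OF ws False])
    have "mv d (hh d w) v = (\<lambda>l. nu * ev d l)"
      using householder[OF vs t] False by (simp add: nu_def w_def)
    then have "fst (act d (hh d w) y) = (\<lambda>l. nu * ev d l)" by (simp add: act_eq v_def)
    then have "Hs d 1 (act d (hh d w) y)" by (auto simp: Hs_def ev_def)
    moreover have "act d (hh d w) y \<in> Vsp d" using act_Vsp[OF y] HO by (simp add: O2_def)
    ultimately show ?thesis using HO by blast
  qed
qed

lemma decomp_step:
  fixes z :: "real pt"
  assumes z: "z \<in> Vsp d" and j: "1 \<le> j" and H: "Hs d j z"
  shows "\<exists>C\<in>O2 d. act d C z \<in> Vsp d \<and> Hs d (Suc j) (act d C z)"
proof (cases "d - Suc j = 0")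
  case True
  then have "Hs d (Suc j) z" using Hs_Suc_iff[OF j, of d z] H by simp
  then show ?thesis using z O2_idm act_idm[OF z] by (intro bexI[of _ "idm d"]) auto
next
  case False
  define c where "c = d - Suc j + 2"
  have c1: "3 \<le> c" "c \<le> d" "c - 1 = d - j" "d - Suc j = c - 2" using False j by (auto simp: c_def)
  define t where "t = c - 1"
  have t: "t \<in> {1..d}" using c1 by (auto simp: t_def)
  define M where "M = snd z"
  define u where "u = (\<lambda>l. if l \<in> {1..c-1} then M l c else 0)"
  have us: "vsupp d u" using c1 by (auto simp: vsupp_def u_def)
  define nu where "nu = sqrt (ip d u u)"
  define w where "w = (\<lambda>l. u l - nu * ev t l)"
  have ws: "vsupp d w" unfolding w_def by (rule vsupp_w[OF us t])
  have wz: "w l = 0" if "l \<ge> c" for l using that c1 by (auto simp: w_def u_def ev_def t_def)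
  show ?thesis
  proof (cases "ip d w w = 0")
    case True
    then have w0: "w l = 0" for l using ip_sq_zero[OF ws] by blast
    have "snd z k (d - Suc j + 2) = 0" if "k \<in> {1..d - Suc j}" for k
    proof -
      have "w k = 0" by (rule w0)
      moreover have "ev t k = 0" using that c1 by (auto simp: ev_def t_def)
      moreover have "u k = M k c" using that c1 by (auto simp: u_def)
      ultimately show ?thesis by (simp add: w_def M_def c_def)
    qed
    then have "Hs d (Suc j) z" using Hs_Suc_iff[OF j, of d z] H by simp
    then show ?thesis using z O2_idm act_idm[OF z] by (intro bexI[of _ "idm d"]) auto
  next
    case False
    define Hm where "Hm = hh d w"
    have HO: "Hm \<in> O2 d" unfolding Hm_def by (rule hh_O2[OF ws False])
    define z' where "z' = act d Hm z"
    have z'V: "z' \<in> Vsp d" using act_Vsp[OF z] HO by (simp add: O2_def z'_def)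
    have "ip d w (fst z) = 0"
    proof -
      have "w l * fst z l = 0" if "l \<in> {1..d}" for l
      proof (cases "l = d")
        case True then show ?thesis using wz c1 by simp
      next
        case False then show ?thesis using H that by (auto simp: Hs_def)
      qed
      then show ?thesis unfolding ip_def by (intro sum.neutral) blast
    qed
    then have f: "fst z' = fst z"
      using mv_hh_fix[OF vsupp_fst[OF z]] by (simp add: z'_def act_eq Hm_def)
    have col: "snd z' k ci = mv d Hm (\<lambda>a. M a ci) k" if "ci \<ge> c" "ci \<in> {1..d}" for k ci
    proof -
      have "w ci = 0" using wz that(1) by blast
      then have "\<forall>b\<in>{1..d}. Hm ci b = idm d ci b" by (simp add: Hm_def hh_row)
      from snd_act_col[of d Hm ci z k, OF this that(2)] show ?thesis by (simp add: z'_def M_def)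
    qed
    have old: "snd z' k (d - Suc i + 2) = 0" if i: "i \<in> {1..j-1}" and k: "k \<in> {1..d - Suc i}" for i k
    proof -
      define ci where "ci = d - Suc i + 2"
      have ik: "1 \<le> i" "i \<le> j - 1" "1 \<le> k" "k \<le> d - Suc i" using i k by auto
      have ci1: "ci \<ge> c + 1" unfolding ci_def c_def using ik \<open>d - Suc j \<noteq> 0\<close> by arith
      have ci2: "1 \<le> ci" "ci \<le> d" unfolding ci_def using ik by arith+
      have ci3: "d - Suc i = ci - 2" unfolding ci_def using ik by arith
      have ci: "ci \<ge> c + 1" "ci \<in> {1..d}" "d - Suc i = ci - 2" using ci1 ci2 ci3 by auto
      have "ip d w (\<lambda>a. M a ci) = 0"
      proof -
        have "w l * M l ci = 0" if "l \<in> {1..d}" for l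
        proof (cases "l \<ge> c")
          case True then show ?thesis using wz by simp
        next
          case False
          then have "l \<in> {1..d - Suc i}" using that ci by auto
          then have "M l ci = 0" using H i by (auto simp: Hs_def M_def ci_def)
          then show ?thesis by simp
        qed
        then show ?thesis unfolding ip_def by (intro sum.neutral) blast
      qed
      then have "mv d Hm (\<lambda>a. M a ci) = (\<lambda>a. M a ci)"
        unfolding Hm_def by (rule mv_hh_fix[OF vsupp_col[OF z, of ci, folded M_def]])
      then have "snd z' k ci = M k ci" using col[of ci k] ci by simp
      also have "M k ci = 0" using H i k by (auto simp: Hs_def M_def ci_def)
      finally show ?thesis by (simp add: ci_def)
    qed
    have new: "snd z' k (d - Suc j + 2) = 0" if k: "k \<in> {1..d - Suc j}" for k
    proof -
      define r where "r = (\<lambda>a. if a \<in> {1..c-1} then 0 else M a c)"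
      have cs: "(\<lambda>a. M a c) = (\<lambda>a. u a + r a)" by (auto simp: u_def r_def)
      have rs: "vsupp d r" using vsupp_col[OF z, of c] by (auto simp: vsupp_def r_def M_def)
      have "w l * r l = 0" for l using wz[of l] ws c1 by (cases "l \<ge> c") (auto simp: r_def vsupp_def)
      then have "ip d w r = 0" unfolding ip_def by (intro sum.neutral) blast
      then have mr: "mv d Hm r = r" unfolding Hm_def by (rule mv_hh_fix[OF rs])
      have mu: "mv d Hm u = (\<lambda>l. nu * ev t l)"
        using householder[OF us t] False by (simp add: Hm_def nu_def w_def)
      have "snd z' k c = mv d Hm (\<lambda>a. M a c) k" using col[of c k] c1 by simp
      also have "\<dots> = nu * ev t k + r k" by (simp add: cs mv_add mr mu)
      also have "\<dots> = 0" using k c1 by (auto simp: ev_def t_def r_def)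
      finally show ?thesis by (simp add: c_def)
    qed
    have "Hs d j z'" using H old unfolding Hs_def f by blast
    then have "Hs d (Suc j) z'" using new Hs_Suc_iff[OF j] by blast
    then show ?thesis using HO z'V unfolding z'_def by blast
  qed
qed

lemma decomp_C:
  fixes y :: "real pt"
  assumes y: "y \<in> Vsp d" and d: "1 \<le> d"
  shows "1 \<le> j \<Longrightarrow> \<exists>C\<in>O2 d. act d C y \<in> Vsp d \<and> Hs d j (act d C y)"
proof (induction j)
  case 0 then show ?case by simp
next
  case (Suc j)
  show ?case
  proof (cases "j = 0")
    case True then show ?thesis using decomp_base[OF y d] by simp
  next
    case False
    then obtain C where C: "C \<in> O2 d" "act d C y \<in> Vsp d" "Hs d j (act d C y)" using Suc by auto
    obtain C' where C': "C' \<in> O2 d" "act d C' (act d C y) \<in> Vsp d" "Hs d (Suc j) (act d C' (act d C y))"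
      using decomp_step[OF C(2) _ C(3)] False by auto
    show ?thesis using C' O2_mm[OF C'(1) C(1)] by (intro bexI[of _ "mm d C' C"]) (auto simp: act_act)
  qed
qed

lemma decomp:
  fixes y :: "real pt"
  assumes y: "y \<in> Vsp d" and d: "1 \<le> d" and j: "1 \<le> j"
  shows "\<exists>B z. B \<in> O2 d \<and> z \<in> Vsp d \<and> Hs d j z \<and> y = act d B z"
proof -
  obtain C where C: "C \<in> O2 d" "act d C y \<in> Vsp d" "Hs d j (act d C y)" using decomp_C[OF y d j] by blast
  have "act d (tr C) (act d C y) = y" using C(1) act_idm[OF y] by (simp add: act_act O2_def)
  then show ?thesis using C O2_tr[OF C(1)] by metis
qed



lemma O2_col: "C \<in> O2 d \<Longrightarrow> (\<Sum>l=1..d. C l a * C l b) = idm d a b"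
proof -
  assume "C \<in> O2 d"
  then have "mm d (tr C) C a b = idm d a b" by (simp add: O2_def)
  then show ?thesis by (simp add: mm_def tr_def)
qed

lemma O2_row: "C \<in> O2 d \<Longrightarrow> (\<Sum>l=1..d. C a l * C b l) = idm d a b"
proof -
  assume "C \<in> O2 d"
  then have "mm d C (tr C) a b = idm d a b" by (simp add: O2_def)
  then show ?thesis by (simp add: mm_def tr_def)
qed

lemma O2_comm:
  assumes C: "C \<in> O2 d" and z: "z \<in> Vsp d"
  shows "mm d C (snd z) = mm d (snd (act d C z)) C"
proof -
  have sC: "supp d C" using C by (simp add: O2_def)
  have "mm d (snd (act d C z)) C = mm d (mm d C (snd z)) (mm d (tr C) C)"
    by (simp add: act_eq mm_assoc)
  also have "\<dots> = mm d C (snd z)" using C supp_mm[OF sC Vsp_supp[OF z]] by (simp add: O2_def mm_idm_right)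
  finally show ?thesis by simp
qed

lemma idm_sym: "idm d a b = idm d b a" by (auto simp: idm_def)

lemma norm_pres:
  fixes C :: "nat \<Rightarrow> nat \<Rightarrow> real"
  assumes C: "C \<in> O2 d"
  shows "(\<Sum>i=1..d. (mv d C u i)^2) = (\<Sum>i=1..d. (u i)^2)"
proof -
  have "(\<Sum>i=1..d. (mv d C u i)^2) = (\<Sum>i=1..d. \<Sum>a=1..d. \<Sum>b=1..d. u a * u b * (C i a * C i b))"
    unfolding mv_def power2_eq_square
    by (simp add: sum_product mult_ac)
  also have "\<dots> = (\<Sum>a=1..d. \<Sum>i=1..d. \<Sum>b=1..d. u a * u b * (C i a * C i b))"
    by (rule sum.swap)
  also have "\<dots> = (\<Sum>a=1..d. \<Sum>b=1..d. \<Sum>i=1..d. u a * u b * (C i a * C i b))"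
    by (rule sum.cong[OF refl], rule sum.swap)
  also have "\<dots> = (\<Sum>a=1..d. \<Sum>b=1..d. u a * u b * (\<Sum>i=1..d. C i a * C i b))"
    by (simp add: sum_distrib_left)
  also have "\<dots> = (\<Sum>a=1..d. \<Sum>b=1..d. u a * u b * idm d a b)"
    using O2_col[OF C] by simp
  also have "\<dots> = (\<Sum>a=1..d. u a * u a)"
  proof (rule sum.cong[OF refl])
    fix a assume a: "a \<in> {1..d}"
    show "(\<Sum>b=1..d. u a * u b * idm d a b) = u a * u a"
      by (subst idm_sym) (use sum_idm_right[OF a, of "\<lambda>b. u a * u b"] in simp)
  qed
  finally show ?thesis by (simp add: power2_eq_square)
qed

lemma sum_single:
  fixes f :: "nat \<Rightarrow> 'a::comm_monoid_add"
  assumes "a \<in> {1..d}" "\<And>k. k \<in> {1..d} \<Longrightarrow> k \<noteq> a \<Longrightarrow> f k = 0"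
  shows "(\<Sum>k=1..d. f k) = f a"
proof -
  have "(\<Sum>k=1..d. f k) = f a + (\<Sum>k\<in>{1..d} - {a}. f k)"
    using assms(1) by (simp add: sum.remove)
  also have "(\<Sum>k\<in>{1..d} - {a}. f k) = 0" using assms(2) by (intro sum.neutral) auto
  finally show ?thesis by simp
qed

definition cl :: "nat \<Rightarrow> (nat \<Rightarrow> nat \<Rightarrow> real) \<Rightarrow> nat \<Rightarrow> bool" where
  "cl d C k = ((\<forall>i\<in>{1..d}. i \<noteq> k \<longrightarrow> C i k = 0) \<and> (C k k)^2 = 1)"

lemma cl_row:
  assumes C: "C \<in> O2 d" and k: "k \<in> {1..d}" and ck: "cl d C k" and a: "a \<in> {1..d}" "a \<noteq> k"
  shows "C k a = 0"
proof -
  have "(\<Sum>l=1..d. C l a * C l k) = idm d a k" by (rule O2_col[OF C])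
  also have "\<dots> = 0" using a by (simp add: idm_def)
  finally have "(\<Sum>l=1..d. C l a * C l k) = 0" .
  moreover have "(\<Sum>l=1..d. C l a * C l k) = C k a * C k k"
    using ck k by (intro sum_single) (auto simp: cl_def)
  ultimately have "C k a * C k k = 0" by simp
  moreover have "C k k \<noteq> 0" using ck by (auto simp: cl_def)
  ultimately show ?thesis by simp
qed

lemma col_norm:
  assumes C: "C \<in> O2 d" and k: "k \<in> {1..d}" and z: "\<forall>i\<in>{1..d}. i \<noteq> k \<longrightarrow> C i k = 0"
  shows "cl d C k"
proof -
  have "(\<Sum>l=1..d. C l k * C l k) = idm d k k" by (rule O2_col[OF C])
  then have "C k k * C k k = 1" using k z sum_single[OF k, of "\<lambda>l. C l k * C l k"] by (simp add: idm_def)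
  then show ?thesis using z by (simp add: cl_def power2_eq_square)
qed

lemma fst_Hs_single: "z \<in> Vsp d \<Longrightarrow> Hs d j z \<Longrightarrow> 1 \<le> d \<Longrightarrow> (\<Sum>l=1..d. f l * fst z l) = f d * fst z d"
  by (rule sum_single) (auto simp: Hs_def)



lemma Hs_col:
  assumes H: "Hs d j z" and t: "t + 2 \<le> j" and jd: "j \<le> d" and k: "k \<in> {1..d - t - 2}"
  shows "snd z k (d - t) = 0"
proof -
  have i: "Suc t \<in> {1..j-1}" using t by auto
  have k': "k \<in> {1..d - Suc (Suc t)}" using k by auto
  have e: "d - Suc (Suc t) + 2 = d - t" using t jd by arith
  show ?thesis using H i k' unfolding Hs_def e[symmetric] by blast
qed

lemma split_sum:
  fixes f :: "nat \<Rightarrow> 'a::comm_monoid_add"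
  assumes "c \<in> {1..d}"
  shows "(\<Sum>i=1..d. f i) = (\<Sum>i=1..c-1. f i) + (\<Sum>i=c..d. f i)"
proof -
  have "{1..d} = {1..c-1} \<union> {c..d}" using assms by auto
  moreover have "{1..c-1} \<inter> {c..d} = {}" by auto
  ultimately show ?thesis by (simp add: sum.union_disjoint)
qed

lemma sign_lemma:
  fixes C :: "nat\<Rightarrow>nat\<Rightarrow>real" and z z' :: "real pt"
  assumes C: "C \<in> O2 d" and z: "z \<in> Vsp d" and z': "z' \<in> Vsp d" and e: "act d C z = z'"
    and Hz: "Hs d j z" and Hz': "Hs d j z'" and j: "1 \<le> j" "j \<le> d"
    and a0: "fst z d \<noteq> 0" and at: "\<forall>t\<in>{1..j-1}. snd z (d-t) (d-t+1) \<noteq> 0"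
  shows "t \<le> j - 1 \<Longrightarrow> \<forall>t'\<le>t. cl d C (d - t')"
proof (induction t)
  case 0
  have dd: "d \<in> {1..d}" using j by auto
  have "C i d = 0" if i: "i \<in> {1..d}" "i \<noteq> d" for i
  proof -
    have "fst z' i = 0" using Hz' i by (auto simp: Hs_def)
    moreover have "fst z' i = (\<Sum>l=1..d. C i l * fst z l)" using e[symmetric] by (simp add: act_eq mv_def)
    moreover have "(\<Sum>l=1..d. C i l * fst z l) = C i d * fst z d"
      by (rule fst_Hs_single[OF z Hz]) (use j in auto)
    ultimately show ?thesis using a0 by simp
  qed
  then have "cl d C d" using col_norm[OF C dd] by blast
  then show ?case by simp
next
  case (Suc t)
  then have IH: "\<forall>t'\<le>t. cl d C (d - t')" by simp
  define c where "c = d - t"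
  define c' where "c' = d - Suc t"
  have cc: "c' = c - 1" "c' \<ge> 1" "c \<le> d" "c' + 1 = c" using Suc.prems j by (auto simp: c_def c'_def)
  have clk: "cl d C k" if "k \<in> {c..d}" for k
  proof -
    have "d - (d - k) = k" "d - k \<le> t" using that cc by (auto simp: c_def)
    then show ?thesis using IH[rule_format, of "d - k"] by simp
  qed
  have M: "mm d C (snd z) = mm d (snd z') C" using O2_comm[OF C z] e by simp
  have c'in: "c' \<in> {1..d}" using cc by auto
  have "C i c' = 0" if i: "i \<in> {1..d}" "i \<noteq> c'" for i
  proof (cases "i < c'")
    case True
    have "mm d (snd z') C i c = (\<Sum>k=1..d. snd z' i k * C k c)" by (simp add: mm_def)
    also have "\<dots> = snd z' i c * C c c"
      using clk[of c] cc by (intro sum_single) (auto simp: cl_def)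
    also have "snd z' i c = 0"
      using Hs_col[OF Hz' _ j(2), of t i] Suc.prems True i cc by (simp add: c_def)
    finally have r: "mm d (snd z') C i c = 0" by simp
    have "mm d C (snd z) i c = (\<Sum>k=1..d. C i k * snd z k c)" by (simp add: mm_def)
    also have "\<dots> = C i c' * snd z c' c"
    proof (rule sum_single[OF c'in])
      fix k assume k: "k \<in> {1..d}" "k \<noteq> c'"
      show "C i k * snd z k c = 0"
      proof (cases "k < c'")
        case True
        then have "snd z k c = 0"
          using Hs_col[OF Hz _ j(2), of t k] Suc.prems k cc by (simp add: c_def)
        then show ?thesis by simp
      next
        case False
        then have "k \<in> {c..d}" using k cc by auto
        moreover have "i \<noteq> k" using \<open>i < c'\<close> \<open>k \<in> {c..d}\<close> cc by auto
        ultimately have "C i k = 0" using clk[of k] i by (auto simp: cl_def)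
        then show ?thesis by simp
      qed
    qed
    finally have "C i c' * snd z c' c = 0" using M r by simp
    moreover have "snd z c' c \<noteq> 0"
    proof -
      have "Suc t \<in> {1..j-1}" using Suc.prems by auto
      then have "snd z (d - Suc t) (d - Suc t + 1) \<noteq> 0" using at by blast
      then show ?thesis using cc by (simp add: c'_def c_def)
    qed
    ultimately show ?thesis by simp
  next
    case False
    then have ic: "i \<in> {c..d}" using i cc by auto
    show ?thesis using cl_row[OF C _ clk[OF ic] c'in] ic i cc by auto
  qed
  then have "cl d C c'" using col_norm[OF C c'in] by blast
  then show ?case using IH by (metis c'_def le_Suc_eq)
qed

lemma g_compare:
  fixes C :: "nat\<Rightarrow>nat\<Rightarrow>real" and z z' :: "real pt"
  assumes C: "C \<in> O2 d" and z: "z \<in> Vsp d" and e: "act d C z = z'"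
    and c: "c \<in> {1..d}" and cls: "\<forall>k\<in>{c..d}. cl d C k"
  shows "(\<Sum>l=1..c-1. (snd z' l c)^2) = (\<Sum>l=1..c-1. (snd z l c)^2)"
proof -
  define M where "M = snd z"
  define N where "N = mm d C M"
  have Mc: "N = mm d (snd z') C" using O2_comm[OF C z] e by (simp add: N_def M_def)
  have clc: "cl d C c" using cls c by auto
  have sq: "(snd z' i c)^2 = (N i c)^2" for i
  proof -
    have "N i c = (\<Sum>k=1..d. snd z' i k * C k c)" by (simp add: Mc mm_def)
    also have "\<dots> = snd z' i c * C c c" using clc c by (intro sum_single) (auto simp: cl_def)
    finally have "N i c = snd z' i c * C c c" .
    then have "(N i c)^2 = (snd z' i c)^2 * (C c c)^2" by (simp add: power_mult_distrib)
    then show ?thesis using clc by (simp add: cl_def)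
  qed
  have hi: "(N i c)^2 = (M i c)^2" if i: "i \<in> {c..d}" for i
  proof -
    have iin: "i \<in> {1..d}" using i c by auto
    have "N i c = (\<Sum>k=1..d. C i k * M k c)" by (simp add: N_def mm_def)
    also have "\<dots> = C i i * M i c"
      using cl_row[OF C iin cls[rule_format, OF i]] by (intro sum_single[OF iin]) auto
    finally have "(N i c)^2 = (C i i)^2 * (M i c)^2" by (simp add: power_mult_distrib)
    then show ?thesis using cls i by (simp add: cl_def)
  qed
  have tot: "(\<Sum>i=1..d. (N i c)^2) = (\<Sum>i=1..d. (M i c)^2)"
  proof -
    have "N i c = mv d C (\<lambda>k. M k c) i" for i by (simp add: N_def mm_def mv_def)
    then show ?thesis using norm_pres[OF C, of "\<lambda>k. M k c"] by simp
  qed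
  have "(\<Sum>i=1..c-1. (N i c)^2) = (\<Sum>i=1..c-1. (M i c)^2)"
    using tot split_sum[OF c, of "\<lambda>i. (N i c)^2"] split_sum[OF c, of "\<lambda>i. (M i c)^2"]
      sum.cong[OF refl hi, of "{c..d}"] by simp
  then show ?thesis using sq by (simp add: M_def)
qed



definition gR :: "nat \<Rightarrow> nat \<Rightarrow> real pt \<Rightarrow> real" where
  "gR d k z = (\<Sum>l=1..d-k. (snd z l (d-k+1))^2)"

lemma act_inv: "C \<in> O2 d \<Longrightarrow> z \<in> Vsp d \<Longrightarrow> act d (tr C) (act d C z) = z"
  by (simp add: act_act O2_def act_idm)

lemma freeness_core:
  fixes x :: "real pt" and A :: "nat \<Rightarrow> nat \<Rightarrow> real"
  assumes d: "2 \<le> d" and x: "x \<in> Vsp d" and vx: "(\<Sum>i=1..d. (fst x i)^2) \<noteq> 0"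
    and F: "\<And>k. k \<in> {1..d-1} \<Longrightarrow> \<exists>B z. B \<in> O2 d \<and> z \<in> Vsp d \<and> Hs d k z \<and> x = act d B z \<and> gR d k z \<noteq> 0"
    and A: "A \<in> O2 d" and Ax: "act d A x = x"
  shows "A = idm d"
proof -
  have P: "1 \<le> j \<Longrightarrow> j \<le> d \<Longrightarrow> \<forall>C z. C \<in> O2 d \<and> z \<in> Vsp d \<and> Hs d j z \<and> x = act d C z \<longrightarrow>
      fst z d \<noteq> 0 \<and> (\<forall>t\<in>{1..j-1}. snd z (d-t) (d-t+1) \<noteq> 0)" for j
  proof (induction j)
    case 0 then show ?case by simp
  next
    case (Suc j)
    show ?case
    proof (cases "j = 0")
      case True
      show ?thesis
      proof (intro allI impI)
        fix C z assume h: "C \<in> O2 d \<and> z \<in> Vsp d \<and> Hs d (Suc j) z \<and> x = act d C z"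
        have zx: "z = act d (tr C) x" using act_inv[of C d z] h by simp
        have "(\<Sum>i=1..d. (fst z i)^2) = (\<Sum>i=1..d. (fst x i)^2)"
        proof -
          have "C \<in> O2 d" using h by blast
          then have "tr C \<in> O2 d" by (rule O2_tr)
          from norm_pres[OF this, of "fst x"] show ?thesis by (simp add: zx act_eq)
        qed
        moreover have "(\<Sum>i=1..d. (fst z i)^2) = (fst z d)^2"
          using h True d by (intro sum_single) (auto simp: Hs_def)
        ultimately have "fst z d \<noteq> 0" using vx by simp
        then show "fst z d \<noteq> 0 \<and> (\<forall>t\<in>{1..Suc j-1}. snd z (d-t) (d-t+1) \<noteq> 0)" using True by simp
      qed
    next
      case False
      have IH: "\<forall>C z. C \<in> O2 d \<and> z \<in> Vsp d \<and> Hs d j z \<and> x = act d C z \<longrightarrow>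
          fst z d \<noteq> 0 \<and> (\<forall>t\<in>{1..j-1}. snd z (d-t) (d-t+1) \<noteq> 0)" using Suc False by simp
      show ?thesis
      proof (intro allI impI)
        fix C z assume h: "C \<in> O2 d \<and> z \<in> Vsp d \<and> Hs d (Suc j) z \<and> x = act d C z"
        have hj: "Hs d j z" using h Hs_Suc by blast
        have ih: "fst z d \<noteq> 0" "\<forall>t\<in>{1..j-1}. snd z (d-t) (d-t+1) \<noteq> 0" using IH h hj by blast+
        have jr: "j \<in> {1..d-1}" using False Suc.prems by auto
        obtain B zj where B: "B \<in> O2 d" "zj \<in> Vsp d" "Hs d j zj" "x = act d B zj" "gR d j zj \<noteq> 0"
          using F[OF jr] by blast
        have ihj: "fst zj d \<noteq> 0" "\<forall>t\<in>{1..j-1}. snd zj (d-t) (d-t+1) \<noteq> 0" using IH B by blast+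
        define D where "D = mm d (tr C) B"
        have CO: "C \<in> O2 d" using h by blast
        have DO: "D \<in> O2 d" unfolding D_def by (rule O2_mm[OF O2_tr[OF CO] B(1)])
        have zx: "z = act d (tr C) x" using act_inv[of C d z] h by simp
        have Dz: "act d D zj = z" using zx B(4) by (simp add: D_def act_act)
        have sl: "\<forall>t'\<le>j-1. cl d D (d - t')"
          using sign_lemma[OF DO B(2) _ Dz B(3) hj _ _ ihj(1) ihj(2), of "j-1"] h False Suc.prems by auto
        define c where "c = d - j + 1"
        have c: "c \<in> {1..d}" "c - 1 = d - j" "d - Suc j + 2 = c" "1 \<le> c - 1"
          using jr by (auto simp: c_def)
        have cls: "\<forall>k\<in>{c..d}. cl d D k"
        proof
          fix k assume k: "k \<in> {c..d}"
          then have "d - (d - k) = k" "d - k \<le> j - 1" by (auto simp: c_def)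
          then show "cl d D k" using sl[rule_format, of "d - k"] by simp
        qed
        have "(\<Sum>l=1..c-1. (snd z l c)^2) = (\<Sum>l=1..c-1. (snd zj l c)^2)"
          by (rule g_compare[OF DO B(2) Dz c(1) cls])
        also have "\<dots> = gR d j zj" using c by (simp add: gR_def c_def)
        finally have s1: "(\<Sum>l=1..c-1. (snd z l c)^2) \<noteq> 0" using B(5) by simp
        have "(\<Sum>l=1..c-1. (snd z l c)^2) = (snd z (c-1) c)^2"
        proof (rule sum_single)
          show "c - 1 \<in> {1..c-1}" using c by auto
        next
          fix k assume k: "k \<in> {1..c-1}" "k \<noteq> c - 1"
          then have "k \<in> {1..d - Suc j}" using c by auto
          then have "snd z k (d - Suc j + 2) = 0" using h Hs_Suc_iff[of j d z] False by auto
          then show "(snd z k c)^2 = 0" using c by simp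
        qed
        then have "snd z (d - j) (d - j + 1) \<noteq> 0" using s1 c by (simp add: c_def)
        then have "\<forall>t\<in>{1..Suc j-1}. snd z (d-t) (d-t+1) \<noteq> 0"
        proof (intro ballI)
          fix t assume t: "t \<in> {1..Suc j-1}" and nz: "snd z (d - j) (d - j + 1) \<noteq> 0"
          show "snd z (d-t) (d-t+1) \<noteq> 0"
          proof (cases "t = j")
            case True then show ?thesis using nz by simp
          next
            case False then have "t \<in> {1..j-1}" using t by auto
            then show ?thesis using ih(2) by blast
          qed
        qed
        then show "fst z d \<noteq> 0 \<and> (\<forall>t\<in>{1..Suc j-1}. snd z (d-t) (d-t+1) \<noteq> 0)" using ih(1) by simp
      qed
    qed
  qed
  have d1: "d - 1 \<in> {1..d-1}" using d by auto
  obtain B z where B: "B \<in> O2 d" "z \<in> Vsp d" "Hs d (d-1) z" "x = act d B z" using F[OF d1] by blast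
  have Hd: "Hs d d z"
  proof -
    have "Suc (d-1) = d" "1 \<le> d - 1" using d by auto
    then show ?thesis using Hs_Suc_iff[of "d-1" d z] B(3) by auto
  qed
  have Pd: "\<forall>C z. C \<in> O2 d \<and> z \<in> Vsp d \<and> Hs d d z \<and> x = act d C z \<longrightarrow>
      fst z d \<noteq> 0 \<and> (\<forall>t\<in>{1..d-1}. snd z (d-t) (d-t+1) \<noteq> 0)" using P[of d] d by simp
  have al0: "fst z d \<noteq> 0 \<and> (\<forall>t\<in>{1..d-1}. snd z (d-t) (d-t+1) \<noteq> 0)"
    using Pd B(1,2,4) Hd by blast
  then have al: "fst z d \<noteq> 0" "\<forall>t\<in>{1..d-1}. snd z (d-t) (d-t+1) \<noteq> 0" by blast+
  define A' where "A' = mm d (tr B) (mm d A B)"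
  have AO: "A' \<in> O2 d" unfolding A'_def by (intro O2_mm O2_tr A B(1))
  have Az: "act d A' z = z"
  proof -
    have "act d A' z = act d (tr B) (act d A (act d B z))" by (simp add: A'_def act_act)
    also have "\<dots> = z" using B(4)[symmetric] Ax act_inv[OF B(1) B(2)] by simp
    finally show ?thesis .
  qed
  have sl: "\<forall>t'\<le>d-1. cl d A' (d - t')"
    using sign_lemma[OF AO B(2) B(2) Az Hd Hd _ _ al(1) al(2), of "d-1"] d by auto
  have clA: "cl d A' k" if "k \<in> {1..d}" for k
  proof -
    have "d - (d - k) = k" "d - k \<le> d - 1" using that by auto
    then show ?thesis using sl[rule_format, of "d - k"] by simp
  qed
  have comm: "mm d A' (snd z) = mm d (snd z) A'" using O2_comm[OF AO B(2)] Az by simp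
  have diag: "t \<le> d - 1 \<Longrightarrow> A' (d - t) (d - t) = 1" for t
  proof (induction t)
    case 0
    have dd: "d \<in> {1..d}" using d by auto
    have "fst z d = mv d A' (fst z) d" using arg_cong[OF Az, of fst] by (simp only: act_eq fst_conv)
    then have "fst z d = (\<Sum>l=1..d. A' d l * fst z l)" by (simp add: mv_def)
    also have "\<dots> = A' d d * fst z d" by (rule fst_Hs_single[OF B(2) Hd]) (use d in auto)
    finally show ?case using al(1) by simp
  next
    case (Suc t)
    define c where "c = d - t"
    define c' where "c' = d - Suc t"
    have cc: "c' + 1 = c" "c \<in> {1..d}" "c' \<in> {1..d}" using Suc.prems by (auto simp: c_def c'_def)
    have IH: "A' c c = 1" using Suc by (simp add: c_def)
    have "mm d A' (snd z) c' c = A' c' c' * snd z c' c"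
      unfolding mm_def using cl_row[OF AO cc(3) clA[OF cc(3)]] cc by (intro sum_single) auto
    moreover have "mm d (snd z) A' c' c = snd z c' c * A' c c"
      unfolding mm_def using clA[OF cc(2)] cc by (intro sum_single) (auto simp: cl_def)
    moreover have "snd z c' c \<noteq> 0"
    proof -
      have "Suc t \<in> {1..d-1}" using Suc.prems by auto
      then have "snd z (d - Suc t) (d - Suc t + 1) \<noteq> 0" using al(2) by blast
      then show ?thesis using cc by (simp add: c'_def)
    qed
    ultimately show ?case using comm IH by (simp add: c'_def)
  qed
  have A'I: "A' = idm d"
  proof (intro ext)
    fix i j show "A' i j = idm d i j"
    proof (cases "i \<in> {1..d} \<and> j \<in> {1..d}")
      case True
      show ?thesis
      proof (cases "i = j")
        case True
        have "d - (d - j) = j" "d - j \<le> d - 1" using \<open>i \<in> {1..d} \<and> j \<in> {1..d}\<close> by auto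
        then have "A' j j = 1" using diag[of "d - j"] by simp
        then show ?thesis using True \<open>i \<in> {1..d} \<and> j \<in> {1..d}\<close> by (simp add: idm_def)
      next
        case False then show ?thesis using clA[of j] True by (simp add: cl_def idm_def)
      qed
    next
      case False then show ?thesis using AO by (auto simp: O2_def supp_def idm_def)
    qed
  qed
  have sA: "supp d A" using A by (simp add: O2_def)
  have BB: "mm d B (tr B) = idm d" using B(1) by (simp add: O2_def)
  have "mm d B (mm d A' (tr B)) = mm d (mm d B (tr B)) (mm d A (mm d B (tr B)))"
    by (simp only: A'_def mm_assoc)
  also have "\<dots> = A" using sA by (simp add: BB mm_idm_left mm_idm_right supp_mm)
  finally have "A = mm d B (mm d A' (tr B))" by simp
  also have "\<dots> = idm d" using B(1) by (simp add: A'I mm_idm_left supp_tr O2_def)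
  finally show ?thesis .
qed



definition close :: "real pt \<Rightarrow> real pt \<Rightarrow> real \<Rightarrow> bool" where
  "close y x e = ((\<forall>i. \<bar>fst y i - fst x i\<bar> < e) \<and> (\<forall>i j. \<bar>snd y i j - snd x i j\<bar> < e))"

definition nb :: "nat \<Rightarrow> real pt \<Rightarrow> real" where
  "nb d y = (\<Sum>i=1..d. \<bar>fst y i\<bar>) + (\<Sum>i=1..d. \<Sum>j=1..d. \<bar>snd y i j\<bar>)"

lemma nb_bound:
  assumes y: "y \<in> Vsp d"
  shows "\<bar>fst y i\<bar> \<le> nb d y" "\<bar>snd y i j\<bar> \<le> nb d y"
proof -
  have s1: "0 \<le> (\<Sum>i=1..d. \<bar>fst y i\<bar>)" by (simp add: sum_nonneg)
  have s2: "0 \<le> (\<Sum>i=1..d. \<Sum>j=1..d. \<bar>snd y i j\<bar>)" by (simp add: sum_nonneg)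
  show "\<bar>fst y i\<bar> \<le> nb d y"
  proof (cases "i \<in> {1..d}")
    case True
    then have "\<bar>fst y i\<bar> \<le> (\<Sum>i=1..d. \<bar>fst y i\<bar>)" by (intro member_le_sum) auto
    then show ?thesis using s2 unfolding nb_def by linarith
  next
    case False then show ?thesis using Vsp_fst[OF y False] s1 s2 by (simp add: nb_def)
  qed
  show "\<bar>snd y i j\<bar> \<le> nb d y"
  proof (cases "i \<in> {1..d} \<and> j \<in> {1..d}")
    case True
    then have "\<bar>snd y i j\<bar> \<le> (\<Sum>j=1..d. \<bar>snd y i j\<bar>)" by (intro member_le_sum) auto
    also have "\<dots> \<le> (\<Sum>i=1..d. \<Sum>j=1..d. \<bar>snd y i j\<bar>)"
      using True by (intro member_le_sum[of _ _ "\<lambda>i. \<Sum>j=1..d. \<bar>snd y i j\<bar>"]) (auto intro: sum_nonneg)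
    finally have "\<bar>snd y i j\<bar> \<le> (\<Sum>i=1..d. \<Sum>j=1..d. \<bar>snd y i j\<bar>)" .
    then show ?thesis using s1 unfolding nb_def by linarith
  next
    case False
    then have "snd y i j = 0" using Vsp_snd0[OF y] by blast
    then show ?thesis using s1 s2 by (simp add: nb_def)
  qed
qed

lemma line_close:
  assumes w: "w \<in> Vsp d" and s: "0 < s" "s < e / (nb d w + 1)"
  shows "close (lpt y w s) y e"
proof -
  have nb0: "0 \<le> nb d w" using nb_bound(1)[OF w, of 0] by linarith
  have se: "s * (nb d w + 1) < e" using s nb0 by (simp add: pos_less_divide_eq)
  have b: "s * \<bar>a\<bar> < e" if "\<bar>a\<bar> \<le> nb d w" for a
  proof -
    have "s * \<bar>a\<bar> \<le> s * nb d w" using that s by (simp add: mult_left_mono)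
    also have "\<dots> < e" using se s by (simp add: algebra_simps)
    finally show ?thesis .
  qed
  show ?thesis unfolding close_def lpt_def
    using b nb_bound[OF w] s by (simp add: abs_mult)
qed

lemma close_trans: assumes "close a b e1" "close b c e2" shows "close a c (e1 + e2)"
  unfolding close_def
proof (intro conjI allI)
  fix i
  have "\<bar>fst a i - fst b i\<bar> < e1" "\<bar>fst b i - fst c i\<bar> < e2" using assms by (auto simp: close_def)
  then show "\<bar>fst a i - fst c i\<bar> < e1 + e2" by arith
next
  fix i j
  have "\<bar>snd a i j - snd b i j\<bar> < e1" "\<bar>snd b i j - snd c i j\<bar> < e2" using assms by (auto simp: close_def)
  then show "\<bar>snd a i j - snd c i j\<bar> < e1 + e2" by arith
qed

lemma approx:
  fixes x :: "real pt" and q' :: "complex pt \<Rightarrow> complex"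
  assumes x: "x \<in> Vsp d" and d: "1 \<le> d" and k: "1 \<le> k" and q': "q' \<in> polyfun"
    and z0: "z0 \<in> Vsp d" "Hs d k z0" "q' (embed z0) \<noteq> 0" and e: "e > 0"
  shows "\<exists>B z. B \<in> O2 d \<and> z \<in> Vsp d \<and> Hs d k z \<and> q' (embed z) \<noteq> 0 \<and> q' (embed (act d B z)) \<noteq> 0
           \<and> close (act d B z) x e"
proof -
  define u where "u = dpt z0 x"
  have uV: "u \<in> Vsp d" unfolding u_def by (rule dpt_Vsp[OF z0(1) x])
  have "q' (lpt (embed x) (embed u) 1) \<noteq> 0"
    using z0(3) embed_lpt[of x u 1] by (simp add: u_def lpt_dpt_1)
  then have R0: "finite {t. q' (lpt (embed x) (embed u) t) = 0}" by (rule polyfun_line_finite[OF q'])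
  have d0: "e / 2 / (nb d u + 1) > 0" using e nb_bound(1)[OF uV, of 0] by (simp add: add_nonneg_pos)
  obtain s where s: "0 < s" "s < e / 2 / (nb d u + 1)" "complex_of_real s \<notin> {t. q' (lpt (embed x) (embed u) t) = 0}"
    using avoid_finite[OF R0 d0] by blast
  define y0 where "y0 = lpt x u s"
  have y0V: "y0 \<in> Vsp d" unfolding y0_def by (rule lpt_Vsp[OF x uV])
  have qy0: "q' (embed y0) \<noteq> 0" using s(3) by (simp add: y0_def embed_lpt)
  have cy0: "close y0 x (e/2)" unfolding y0_def by (rule line_close[OF uV s(1) s(2)])
  obtain B z where Bz: "B \<in> O2 d" "z \<in> Vsp d" "Hs d k z" "y0 = act d B z"
    using decomp[OF y0V d k] by blast
  define u' where "u' = dpt z0 z"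
  have u'V: "u' \<in> Vsp d" unfolding u'_def by (rule dpt_Vsp[OF z0(1) Bz(2)])
  define w where "w = act d B u'"
  have wV: "w \<in> Vsp d" unfolding w_def using act_Vsp[OF u'V] Bz(1) by (simp add: O2_def)
  have "q' (lpt (embed z) (embed u') 1) \<noteq> 0"
    using z0(3) embed_lpt[of z u' 1] by (simp add: u'_def lpt_dpt_1)
  then have R1: "finite {t. q' (lpt (embed z) (embed u') t) = 0}" by (rule polyfun_line_finite[OF q'])
  have "q' (lpt (embed y0) (embed w) 0) \<noteq> 0" using qy0 by (simp add: lpt_0)
  then have R2: "finite {t. q' (lpt (embed y0) (embed w) t) = 0}" by (rule polyfun_line_finite[OF q'])
  have d1: "e / 2 / (nb d w + 1) > 0" using e nb_bound(1)[OF wV, of 0] by (simp add: add_nonneg_pos)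
  obtain s' where s': "0 < s'" "s' < e / 2 / (nb d w + 1)"
    "complex_of_real s' \<notin> {t. q' (lpt (embed z) (embed u') t) = 0} \<union> {t. q' (lpt (embed y0) (embed w) t) = 0}"
    using avoid_finite[OF finite_UnI[OF R1 R2] d1] by blast
  define z' where "z' = lpt z u' s'"
  have z'V: "z' \<in> Vsp d" unfolding z'_def by (rule lpt_Vsp[OF Bz(2) u'V])
  have z'H: "Hs d k z'" unfolding z'_def u'_def by (intro Hs_lpt Hs_dpt Bz(3) z0(2))
  have qz': "q' (embed z') \<noteq> 0" using s'(3) by (simp add: z'_def embed_lpt)
  have az': "act d B z' = lpt y0 w s'" by (simp add: z'_def act_lpt Bz(4) w_def)
  have qaz': "q' (embed (act d B z')) \<noteq> 0" using s'(3) by (simp add: az' embed_lpt)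
  have "close (act d B z') y0 (e/2)" unfolding az' by (rule line_close[OF wV s'(1) s'(2)])
  then have "close (act d B z') x (e/2 + e/2)" using cy0 by (rule close_trans)
  then have "close (act d B z') x e" by simp
  then show ?thesis using Bz(1) z'V z'H qz' qaz' by blast
qed

lemma close_lim:
  fixes f :: "nat \<Rightarrow> real"
  assumes "\<And>n. \<bar>f n - L\<bar> < 1 / real (Suc n)"
  shows "f \<longlonglongrightarrow> L"
proof -
  have "(\<lambda>n. f n - L) \<longlonglongrightarrow> 0" using assms by (intro LIMSEQ_norm_0) simp
  from tendsto_add[OF this tendsto_const[of L]] show ?thesis by simp
qed



lemma gfun_gR: "k \<in> {1..d-1} \<Longrightarrow> gfun d (Suc k) (embed z) = complex_of_real (gR d k z)"
proof -
  assume k: "k \<in> {1..d-1}"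
  then have e: "d - Suc k + 1 = d - k" "d - Suc k + 2 = d - k + 1" by auto
  show ?thesis using k unfolding gfun_def gR_def e by (simp add: embed_def)
qed

lemma gfun1: "gfun d 1 (embed x) = complex_of_real (\<Sum>i=1..d. (fst x i)^2)"
  by (simp add: gfun_def embed_def)

lemma ptlim_subseq: assumes Y: "ptlim Y y" and r: "strict_mono r" shows "ptlim (\<lambda>n. Y (r n)) y"
  unfolding ptlim_def
proof (intro conjI allI)
  fix i
  have "(\<lambda>n. fst (Y n) i) \<longlonglongrightarrow> fst y i" using Y by (simp add: ptlim_def)
  from LIMSEQ_subseq_LIMSEQ[OF this r] show "(\<lambda>n. fst (Y (r n)) i) \<longlonglongrightarrow> fst y i" by (simp add: o_def)
next
  fix i j
  have "(\<lambda>n. snd (Y n) i j) \<longlonglongrightarrow> snd y i j" using Y by (simp add: ptlim_def)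
  from LIMSEQ_subseq_LIMSEQ[OF this r] show "(\<lambda>n. snd (Y (r n)) i j) \<longlonglongrightarrow> snd y i j" by (simp add: o_def)
qed

lemma limit_lemma:
  fixes x :: "real pt"
  assumes d: "2 \<le> d" and x: "x \<in> Vsp d" and k: "k \<in> {1..d-1}"
    and pq: "(p, q) \<in> frep d (Suc k)" "q (embed x) \<noteq> 0" "p (embed x) \<noteq> 0"
  shows "\<exists>B z. B \<in> O2 d \<and> z \<in> Vsp d \<and> Hs d k z \<and> x = act d B z \<and> gR d k z \<noteq> 0"
proof -
  have k1: "1 \<le> k" and d1: "1 \<le> d" using k d by auto
  have "Suc k \<noteq> 1" using k by simp
  then have rr: "ratrep d p q" and "\<exists>p' q'. ratrep d p' q' \<and> ratequiv d p q p' q' \<and> invariant d p' q'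
      \<and> restricts_to (Lsl d k) p' q' (gfun d (Suc k))"
    using pq(1) unfolding frep_def by auto
  then obtain p' q' where pq': "ratrep d p' q'" "ratequiv d p q p' q'" "invariant d p' q'"
      "restricts_to (Lsl d k) p' q' (gfun d (Suc k))" by blast
  have pp: "p \<in> polyfun" "q \<in> polyfun" using rr by (auto simp: ratrep_def)
  have q': "q' \<in> polyfun" using pq'(1) by (simp add: ratrep_def)
  have L: "Lsl d k = {y \<in> Vsp d. Hs d k y}" by (rule Lsl_Hs[OF k1])
  have res: "\<forall>y\<in>Lsl d k. p' y = gfun d (Suc k) y * q' y" using pq'(4) by (simp add: restricts_to_def)
  have inv: "\<forall>A\<in>Orth d. \<forall>y\<in>Vsp d. p' (act d A y) * q' y = p' y * q' (act d A y)"
    using pq'(3) by (simp add: invariant_def)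
  have req: "\<forall>y\<in>Vsp d. p y * q' y = p' y * q y" using pq'(2) by (simp add: ratequiv_def)
  obtain w where w: "w \<in> Lsl d k" "q' w \<noteq> 0" using pq'(4) by (auto simp: restricts_to_def nonzero_on_def)
  have wV: "w \<in> Vsp d" and wH: "Hs d k w" using w(1) L by auto
  define a where "a = ((\<lambda>i. Re (fst w i)), (\<lambda>i j. Re (snd w i j)))"
  define b where "b = ((\<lambda>i. Im (fst w i)), (\<lambda>i j. Im (snd w i j)))"
  have wab: "w = lpt (embed a) (embed b) \<i>"
    by (simp add: lpt_def embed_def a_def b_def prod_eq_iff fun_eq_iff complex_eq_iff)
  have aV: "a \<in> Vsp d"
  proof (rule VspI)
    fix i assume "i \<notin> {1..d}" then show "fst a i = 0" using Vsp_fst[OF wV] by (simp add: a_def)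
  next
    fix i j assume "i \<notin> {1..d} \<or> j \<notin> {1..d}" then show "snd a i j = 0" using Vsp_snd0[OF wV] by (simp add: a_def)
  next
    fix i j show "snd a i j = - snd a j i" using Vsp_skew[OF wV, of i j] by (simp add: a_def)
  qed
  have bV: "b \<in> Vsp d"
  proof (rule VspI)
    fix i assume "i \<notin> {1..d}" then show "fst b i = 0" using Vsp_fst[OF wV] by (simp add: b_def)
  next
    fix i j assume "i \<notin> {1..d} \<or> j \<notin> {1..d}" then show "snd b i j = 0" using Vsp_snd0[OF wV] by (simp add: b_def)
  next
    fix i j show "snd b i j = - snd b j i" using Vsp_skew[OF wV, of i j] by (simp add: b_def)
  qed
  have aH: "Hs d k a" using wH by (simp add: Hs_def a_def)
  have bH: "Hs d k b" using wH by (simp add: Hs_def b_def)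
  have "q' (lpt (embed a) (embed b) \<i>) \<noteq> 0" using w(2) wab by simp
  then have Rw: "finite {t. q' (lpt (embed a) (embed b) t) = 0}" by (rule polyfun_line_finite[OF q'])
  obtain s0 where s0: "complex_of_real s0 \<notin> {t. q' (lpt (embed a) (embed b) t) = 0}"
    using avoid_finite[OF Rw, of 1] by auto
  define z0 where "z0 = lpt a b s0"
  have z0: "z0 \<in> Vsp d" "Hs d k z0" "q' (embed z0) \<noteq> 0"
    using lpt_Vsp[OF aV bV] Hs_lpt[OF aH bH] s0 by (auto simp: z0_def embed_lpt)
  have "\<forall>n. \<exists>Bz. fst Bz \<in> O2 d \<and> snd Bz \<in> Vsp d \<and> Hs d k (snd Bz) \<and> q' (embed (snd Bz)) \<noteq> 0
      \<and> q' (embed (act d (fst Bz) (snd Bz))) \<noteq> 0 \<and> close (act d (fst Bz) (snd Bz)) x (1 / real (Suc n))"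
  proof
    fix n
    have "(0::real) < 1 / real (Suc n)" by simp
    from approx[OF x d1 k1 q' z0 this] show "\<exists>Bz. fst Bz \<in> O2 d \<and> snd Bz \<in> Vsp d \<and> Hs d k (snd Bz) \<and> q' (embed (snd Bz)) \<noteq> 0
      \<and> q' (embed (act d (fst Bz) (snd Bz))) \<noteq> 0 \<and> close (act d (fst Bz) (snd Bz)) x (1 / real (Suc n))"
      by (metis fst_conv snd_conv)
  qed
  then obtain f where f: "\<forall>n. fst (f n) \<in> O2 d \<and> snd (f n) \<in> Vsp d \<and> Hs d k (snd (f n)) \<and> q' (embed (snd (f n))) \<noteq> 0
      \<and> q' (embed (act d (fst (f n)) (snd (f n)))) \<noteq> 0 \<and> close (act d (fst (f n)) (snd (f n))) x (1 / real (Suc n))"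
    by (metis choice)
  define Bs where "Bs n = fst (f n)" for n
  define zs where "zs n = snd (f n)" for n
  define ys where "ys n = act d (Bs n) (zs n)" for n
  have S: "Bs n \<in> O2 d" "zs n \<in> Vsp d" "Hs d k (zs n)" "q' (embed (zs n)) \<noteq> 0"
      "q' (embed (ys n)) \<noteq> 0" "close (ys n) x (1 / real (Suc n))" for n
    using f by (auto simp: Bs_def zs_def ys_def)
  have ysV: "ys n \<in> Vsp d" for n using act_Vsp[OF S(2)] S(1) by (simp add: O2_def ys_def)
  have eq: "p (embed (ys n)) = gfun d (Suc k) (embed (zs n)) * q (embed (ys n))" for n
  proof -
    define eB where "eB = embM (Bs n)"
    have eBO: "eB \<in> Orth d" using embM_Orth[OF O2_Orth[OF S(1)]] by (simp add: eB_def)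
    have ezV: "embed (zs n) \<in> Vsp d" using S(2) by (simp add: embed_Vsp)
    have ezL: "embed (zs n) \<in> Lsl d k" using S(2,3) L by (simp add: embed_Vsp Hs_embed)
    have ey: "embed (ys n) = act d eB (embed (zs n))" by (simp add: ys_def eB_def act_embed)
    have eyV: "embed (ys n) \<in> Vsp d" using ysV by (simp add: embed_Vsp)
    have i1: "p' (embed (ys n)) * q' (embed (zs n)) = p' (embed (zs n)) * q' (embed (ys n))"
      using inv eBO ezV ey by simp
    have i2: "p' (embed (zs n)) = gfun d (Suc k) (embed (zs n)) * q' (embed (zs n))" using res ezL by blast
    have "p' (embed (ys n)) * q' (embed (zs n)) = (gfun d (Suc k) (embed (zs n)) * q' (embed (ys n))) * q' (embed (zs n))"
      using i1 i2 by (simp add: mult_ac)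
    then have i3: "p' (embed (ys n)) = gfun d (Suc k) (embed (zs n)) * q' (embed (ys n))" using S(4) by simp
    have "p (embed (ys n)) * q' (embed (ys n)) = p' (embed (ys n)) * q (embed (ys n))" using req eyV by blast
    then have "p (embed (ys n)) * q' (embed (ys n)) = (gfun d (Suc k) (embed (zs n)) * q (embed (ys n))) * q' (embed (ys n))"
      using i3 by (simp add: mult_ac)
    then show ?thesis using S(5) by simp
  qed
  have yl: "ptlim ys x"
    unfolding ptlim_def using S(6) by (auto simp: close_def intro!: close_lim)
  obtain r where r: "strict_mono r" "\<forall>ij\<in>{1..d}\<times>{1..d}. convergent (\<lambda>n. Bs (r n) (fst ij) (snd ij))"
    using finite_subseq[of "{1..d}\<times>{1..d}" "\<lambda>n ij. Bs n (fst ij) (snd ij)"] O2_bound[OF S(1)] by blast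
  define Bst where "Bst i j = lim (\<lambda>n. Bs (r n) i j)" for i j
  have out0: "Bs n i j = 0" if "\<not> (i \<in> {1..d} \<and> j \<in> {1..d})" for n i j
    using S(1)[of n] that by (auto simp: O2_def supp_def)
  have conv: "(\<lambda>n. Bs (r n) i j) \<longlonglongrightarrow> Bst i j" for i j
  proof -
    have "convergent (\<lambda>n. Bs (r n) i j)"
    proof (cases "i \<in> {1..d} \<and> j \<in> {1..d}")
      case True then show ?thesis using r(2) by auto
    next
      case False then have "(\<lambda>n. Bs (r n) i j) = (\<lambda>n. 0)" using out0 by auto
      then show ?thesis by (simp add: convergent_const)
    qed
    then show ?thesis by (simp add: Bst_def convergent_LIMSEQ_iff)
  qed
  have suppB: "supp d Bst"
    unfolding supp_def
  proof (intro allI impI)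
    fix i j assume ij: "i \<notin> {1..d} \<or> j \<notin> {1..d}"
    then have "(\<lambda>n. Bs (r n) i j) = (\<lambda>n. 0)" using out0 by auto
    then show "Bst i j = 0" by (simp add: Bst_def)
  qed
  have m1: "mm d Bst (tr Bst) = idm d"
  proof (intro ext)
    fix i j
    have "(\<lambda>n. mm d (Bs (r n)) (tr (Bs (r n))) i j) \<longlonglongrightarrow> mm d Bst (tr Bst) i j"
      unfolding mm_def tr_def by (intro tendsto_sum tendsto_mult conv)
    moreover have "(\<lambda>n. mm d (Bs (r n)) (tr (Bs (r n))) i j) = (\<lambda>n. idm d i j)"
      using S(1) by (simp add: O2_def)
    ultimately show "mm d Bst (tr Bst) i j = idm d i j" using LIMSEQ_unique tendsto_const by metis
  qed
  have m2: "mm d (tr Bst) Bst = idm d"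
  proof (intro ext)
    fix i j
    have "(\<lambda>n. mm d (tr (Bs (r n))) (Bs (r n)) i j) \<longlonglongrightarrow> mm d (tr Bst) Bst i j"
      unfolding mm_def tr_def by (intro tendsto_sum tendsto_mult conv)
    moreover have "(\<lambda>n. mm d (tr (Bs (r n))) (Bs (r n)) i j) = (\<lambda>n. idm d i j)"
      using S(1) by (simp add: O2_def)
    ultimately show "mm d (tr Bst) Bst i j = idm d i j" using LIMSEQ_unique tendsto_const by metis
  qed
  have BstO: "Bst \<in> O2 d" using suppB m1 m2 by (simp add: O2_def)
  define zst where "zst = act d (tr Bst) x"
  have zsr: "zs (r n) = act d (tr (Bs (r n))) (ys (r n))" for n
    using act_inv[OF S(1) S(2)] by (simp add: ys_def)
  have zl: "ptlim (\<lambda>n. zs (r n)) zst"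
  proof -
    have "ptlim (\<lambda>n. act d (tr (Bs (r n))) (ys (r n))) (act d (tr Bst) x)"
      by (rule ptlim_act) (auto simp: tr_def intro: conv ptlim_subseq[OF yl r(1)])
    then show ?thesis by (simp add: zsr zst_def)
  qed
  have zstV: "zst \<in> Vsp d" by (rule ptlim_Vsp[OF zl]) (simp add: S(2))
  have zstH: "Hs d k zst" by (rule ptlim_Hs[OF zl]) (simp add: S(3))
  have xz: "x = act d Bst zst" using m1 act_idm[OF x] by (simp add: zst_def act_act)
  have yrl: "ptlim (\<lambda>n. embed (ys (r n))) (embed x)" by (rule ptlim_embed[OF ptlim_subseq[OF yl r(1)]])
  have zrl: "ptlim (\<lambda>n. embed (zs (r n))) (embed zst)" by (rule ptlim_embed[OF zl])
  have L1: "(\<lambda>n. p (embed (ys (r n)))) \<longlonglongrightarrow> p (embed x)" by (rule polyfun_cont[OF pp(1) yrl])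
  have L2: "(\<lambda>n. gfun d (Suc k) (embed (zs (r n))) * q (embed (ys (r n)))) \<longlonglongrightarrow> gfun d (Suc k) (embed zst) * q (embed x)"
    by (intro tendsto_mult polyfun_cont[OF gfun_polyfun zrl] polyfun_cont[OF pp(2) yrl])
  have "p (embed x) = gfun d (Suc k) (embed zst) * q (embed x)"
    using L1 L2 eq LIMSEQ_unique by (metis (no_types, lifting) ext)
  then have "gfun d (Suc k) (embed zst) \<noteq> 0" using pq(3) by auto
  then have "gR d k zst \<noteq> 0" using gfun_gR[OF k] by simp
  then show ?thesis using BstO zstV zstH xz by blast
qed

theorem corollary3p13:
  fixes d :: nat and A :: "nat \<Rightarrow> nat \<Rightarrow> real" and x :: "real pt"
  assumes "d \<ge> 2" and "x \<in> Ure d" and "A \<in> Orth d" and "act d A x = x"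
  shows "A = idm d"
proof -
  have ex: "embed x \<in> Ucx d" using assms(2) by (simp add: Ure_def)
  then have "embed x \<in> Vsp d" unfolding Ucx_def by blast
  then have xV: "x \<in> Vsp d" by (simp add: embed_Vsp)
  have U: "\<forall>k\<in>{1..d}. \<exists>(p, q)\<in>frep d k. q (embed x) \<noteq> 0 \<and> p (embed x) \<noteq> 0"
    using ex unfolding Ucx_def by blast
  have vx: "(\<Sum>i=1..d. (fst x i)^2) \<noteq> 0"
  proof -
    have "1 \<in> {1..d}" using assms(1) by simp
    then obtain p q where pq: "(p, q) \<in> frep d 1" "q (embed x) \<noteq> 0" "p (embed x) \<noteq> 0" using U by blast
    then have "ratequiv d p q (gfun d 1) (\<lambda>x. 1)" by (simp add: frep_def)
    then have "p (embed x) = gfun d 1 (embed x) * q (embed x)"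
      using \<open>embed x \<in> Vsp d\<close> by (simp add: ratequiv_def)
    then have gn: "gfun d 1 (embed x) \<noteq> 0" using pq(3) by auto
    have g: "gfun d 1 (embed x) = complex_of_real (\<Sum>i=1..d. (fst x i)^2)" by (rule gfun1)
    show ?thesis
    proof
      assume s: "(\<Sum>i=1..d. (fst x i)^2) = 0"
      have "gfun d 1 (embed x) = 0" unfolding g s by simp
      with gn show False by contradiction
    qed
  qed
  have F: "\<exists>B z. B \<in> O2 d \<and> z \<in> Vsp d \<and> Hs d k z \<and> x = act d B z \<and> gR d k z \<noteq> 0"
    if k: "k \<in> {1..d-1}" for k
  proof -
    have "Suc k \<in> {1..d}" using k by auto
    then obtain p q where pq: "(p, q) \<in> frep d (Suc k)" "q (embed x) \<noteq> 0" "p (embed x) \<noteq> 0" using U by blast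
    show ?thesis by (rule limit_lemma[OF assms(1) xV k pq])
  qed
  have AO: "A \<in> O2 d" by (rule Orth_O2[OF assms(3)])
  show ?thesis by (rule freeness_core[OF assms(1) xV vx F AO assms(4)])
qed

end
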